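(* Every regular coherent group is torsionfree.
   Context: A ring is regular if it is Noetherian and every finitely generated module has a finite-dimensional resolution by finitely generated projective modules; it is regular coherent if every finitely presented module has a finite-dimensional resolution by finitely generated projective modules. A group $G$ is regular coherent if the group ring $RG$ is regular coherent for every regular ring $R$. *)

theory Defs
  imports "HOL-Algebra.Module"
begin

definition left_module :: "('a, 'c) ring_scheme \<Rightarrow> ('a, 'b, 'd) module_scheme \<Rightarrow> bool" where
  "left_module R M \<longleftrightarrow> ring R \<and> abelian_group M \<and>
     (\<forall>a\<in>carrier R. \<forall>x\<in>carrier M. a \<odot>\<^bsub>M\<^esub> x \<in> carrier M) \<and>
     (\<forall>a\<in>carrier R. \<forall>b\<in>carrier R. \<forall>x\<in>carrier M.
        (a \<oplus>\<^bsub>R\<^esub> b) \<odot>\<^bsub>M\<^esub> x = a \<odot>\<^bsub>M\<^esub> x \<oplus>\<^bsub>M\<^esub> b \<odot>\<^bsub>M\<^esub> x) \<and>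
     (\<forall>a\<in>carrier R. \<forall>x\<in>carrier M. \<forall>y\<in>carrier M.
        a \<odot>\<^bsub>M\<^esub> (x \<oplus>\<^bsub>M\<^esub> y) = a \<odot>\<^bsub>M\<^esub> x \<oplus>\<^bsub>M\<^esub> a \<odot>\<^bsub>M\<^esub> y) \<and>
     (\<forall>a\<in>carrier R. \<forall>b\<in>carrier R. \<forall>x\<in>carrier M.
        (a \<otimes>\<^bsub>R\<^esub> b) \<odot>\<^bsub>M\<^esub> x = a \<odot>\<^bsub>M\<^esub> (b \<odot>\<^bsub>M\<^esub> x)) \<and>
     (\<forall>x\<in>carrier M. \<one>\<^bsub>R\<^esub> \<odot>\<^bsub>M\<^esub> x = x)"

definition lin_hom :: "('a, 'c) ring_scheme \<Rightarrow> ('a, 'b, 'd) module_scheme \<Rightarrow> ('a, 'e, 'f) module_scheme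
                         \<Rightarrow> ('b \<Rightarrow> 'e) set" where
  "lin_hom R M N = {f. f \<in> carrier M \<rightarrow> carrier N \<and>
     (\<forall>x\<in>carrier M. \<forall>y\<in>carrier M. f (x \<oplus>\<^bsub>M\<^esub> y) = f x \<oplus>\<^bsub>N\<^esub> f y) \<and>
     (\<forall>a\<in>carrier R. \<forall>x\<in>carrier M. f (a \<odot>\<^bsub>M\<^esub> x) = a \<odot>\<^bsub>N\<^esub> f x)}"

definition lin_kernel :: "('a, 'b, 'd) module_scheme \<Rightarrow> ('a, 'e, 'f) module_scheme \<Rightarrow> ('b \<Rightarrow> 'e) \<Rightarrow> 'b set" where
  "lin_kernel M N f = {x \<in> carrier M. f x = \<zero>\<^bsub>N\<^esub>}"

definition free_mod :: "('a, 'c) ring_scheme \<Rightarrow> nat \<Rightarrow> ('a, nat \<Rightarrow> 'a) module" where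
  "free_mod R n =
     \<lparr>carrier = {v. (\<forall>i<n. v i \<in> carrier R) \<and> (\<forall>i\<ge>n. v i = \<zero>\<^bsub>R\<^esub>)},
      mult = (\<lambda>_ _. undefined), one = undefined,
      zero = (\<lambda>_. \<zero>\<^bsub>R\<^esub>),
      add = (\<lambda>u v i. if i < n then u i \<oplus>\<^bsub>R\<^esub> v i else \<zero>\<^bsub>R\<^esub>),
      smult = (\<lambda>a v i. if i < n then a \<otimes>\<^bsub>R\<^esub> v i else \<zero>\<^bsub>R\<^esub>)\<rparr>"

text \<open>Finitely generated projective = direct summand (retract) of some R^n.\<close>
definition fg_projective :: "('a, 'c) ring_scheme \<Rightarrow> ('a, 'b, 'd) module_scheme \<Rightarrow> bool" where
  "fg_projective R P \<longleftrightarrow> left_module R P \<and>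
     (\<exists>n i p. i \<in> lin_hom R P (free_mod R n) \<and> p \<in> lin_hom R (free_mod R n) P \<and>
              (\<forall>x\<in>carrier P. p (i x) = x))"

definition fin_generated :: "('a, 'c) ring_scheme \<Rightarrow> ('a, 'b, 'd) module_scheme \<Rightarrow> bool" where
  "fin_generated R M \<longleftrightarrow> left_module R M \<and>
     (\<exists>n f. f \<in> lin_hom R (free_mod R n) M \<and> f ` carrier (free_mod R n) = carrier M)"

definition fin_presented :: "('a, 'c) ring_scheme \<Rightarrow> ('a, 'b, 'd) module_scheme \<Rightarrow> bool" where
  "fin_presented R M \<longleftrightarrow> left_module R M \<and>
     (\<exists>n m f g. f \<in> lin_hom R (free_mod R n) M \<and> f ` carrier (free_mod R n) = carrier M \<and>
        g \<in> lin_hom R (free_mod R m) (free_mod R n) \<and>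
        g ` carrier (free_mod R m) = lin_kernel (free_mod R n) M f)"

text \<open>M has a finite-dimensional resolution
  0 \<rightarrow> P_k \<rightarrow> ... \<rightarrow> P_1 \<rightarrow> P_0 \<rightarrow> M \<rightarrow> 0 by finitely generated projective modules
  (encoded as an exact sequence indexed by all naturals with P_i = 0 for i > k).
  Every f.g. projective module is isomorphic to a submodule of some R^n, so the
  modules P_i are taken with carrier type nat \<Rightarrow> 'a.\<close>
definition has_fin_proj_res :: "('a, 'c) ring_scheme \<Rightarrow> ('a, 'b, 'd) module_scheme \<Rightarrow> bool" where
  "has_fin_proj_res R M \<longleftrightarrow>
     (\<exists>(P :: nat \<Rightarrow> ('a, nat \<Rightarrow> 'a) module) d \<epsilon> (k::nat).
        (\<forall>i. fg_projective R (P i)) \<and>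
        (\<forall>i>k. carrier (P i) = {\<zero>\<^bsub>P i\<^esub>}) \<and>
        (\<forall>i. d i \<in> lin_hom R (P (Suc i)) (P i)) \<and>
        \<epsilon> \<in> lin_hom R (P 0) M \<and> \<epsilon> ` carrier (P 0) = carrier M \<and>
        lin_kernel (P 0) M \<epsilon> = d 0 ` carrier (P 1) \<and>
        (\<forall>i. lin_kernel (P (Suc i)) (P i) (d i) = d (Suc i) ` carrier (P (Suc (Suc i)))))"

definition left_ideal :: "('a, 'c) ring_scheme \<Rightarrow> 'a set \<Rightarrow> bool" where
  "left_ideal R I \<longleftrightarrow> I \<subseteq> carrier R \<and> \<zero>\<^bsub>R\<^esub> \<in> I \<and>
     (\<forall>x\<in>I. \<forall>y\<in>I. x \<oplus>\<^bsub>R\<^esub> y \<in> I) \<and> (\<forall>x\<in>I. \<ominus>\<^bsub>R\<^esub> x \<in> I) \<and>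
     (\<forall>r\<in>carrier R. \<forall>x\<in>I. r \<otimes>\<^bsub>R\<^esub> x \<in> I)"

definition noetherian_ring :: "('a, 'c) ring_scheme \<Rightarrow> bool" where
  "noetherian_ring R \<longleftrightarrow> ring R \<and>
     (\<forall>I :: nat \<Rightarrow> 'a set. (\<forall>n. left_ideal R (I n)) \<and> (\<forall>n. I n \<subseteq> I (Suc n)) \<longrightarrow>
        (\<exists>N. \<forall>n\<ge>N. I n = I N))"

text \<open>Modules quantified over carry carrier type (nat \<Rightarrow> 'a) set; every finitely
  generated module is isomorphic to such a one (a quotient of R^n, elements = cosets).\<close>
definition regular_ring :: "('a, 'c) ring_scheme \<Rightarrow> bool" where
  "regular_ring R \<longleftrightarrow> noetherian_ring R \<and>
     (\<forall>M :: ('a, (nat \<Rightarrow> 'a) set) module. fin_generated R M \<longrightarrow> has_fin_proj_res R M)"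

definition regular_coherent_ring :: "('a, 'c) ring_scheme \<Rightarrow> bool" where
  "regular_coherent_ring R \<longleftrightarrow> ring R \<and>
     (\<forall>M :: ('a, (nat \<Rightarrow> 'a) set) module. fin_presented R M \<longrightarrow> has_fin_proj_res R M)"

definition group_ring :: "('a, 'c) ring_scheme \<Rightarrow> ('g, 'e) monoid_scheme \<Rightarrow> ('g \<Rightarrow> 'a) ring" where
  "group_ring R G =
     \<lparr>carrier = {f. (\<forall>x\<in>carrier G. f x \<in> carrier R) \<and> (\<forall>x. x \<notin> carrier G \<longrightarrow> f x = \<zero>\<^bsub>R\<^esub>)
                    \<and> finite {x. f x \<noteq> \<zero>\<^bsub>R\<^esub>}},
      mult = (\<lambda>f h x. if x \<in> carrier G
                 then finsum R (\<lambda>y. f y \<otimes>\<^bsub>R\<^esub> h (inv\<^bsub>G\<^esub> y \<otimes>\<^bsub>G\<^esub> x)) {y \<in> carrier G. f y \<noteq> \<zero>\<^bsub>R\<^esub>}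
                 else \<zero>\<^bsub>R\<^esub>),
      one = (\<lambda>x. if x = \<one>\<^bsub>G\<^esub> then \<one>\<^bsub>R\<^esub> else \<zero>\<^bsub>R\<^esub>),
      zero = (\<lambda>_. \<zero>\<^bsub>R\<^esub>),
      add = (\<lambda>f h x. if x \<in> carrier G then f x \<oplus>\<^bsub>R\<^esub> h x else \<zero>\<^bsub>R\<^esub>)\<rparr>"

definition regular_coherent_group :: "'r itself \<Rightarrow> ('g, 'e) monoid_scheme \<Rightarrow> bool" where
  "regular_coherent_group _ G \<longleftrightarrow>
     (\<forall>R :: 'r ring. regular_ring R \<longrightarrow> regular_coherent_ring (group_ring R G))"

definition torsionfree :: "('g, 'e) monoid_scheme \<Rightarrow> bool" where
  "torsionfree G \<longleftrightarrow>
     (\<forall>g\<in>carrier G. (\<exists>n::nat. n > 0 \<and> g [^]\<^bsub>G\<^esub> n = \<one>\<^bsub>G\<^esub>) \<longrightarrow> g = \<one>\<^bsub>G\<^esub>)"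

end

theory Submission
  imports Defs "HOL-Number_Theory.Residues" "HOL-Algebra.QuotRing"
begin


lemma lmD:
  assumes "left_module R M"
  shows "ring R" "abelian_group M"
    "\<And>a x. a\<in>carrier R \<Longrightarrow> x\<in>carrier M \<Longrightarrow> a \<odot>\<^bsub>M\<^esub> x \<in> carrier M"
    "\<And>a b x. a\<in>carrier R \<Longrightarrow> b\<in>carrier R \<Longrightarrow> x\<in>carrier M \<Longrightarrow>
        (a \<oplus>\<^bsub>R\<^esub> b) \<odot>\<^bsub>M\<^esub> x = a \<odot>\<^bsub>M\<^esub> x \<oplus>\<^bsub>M\<^esub> b \<odot>\<^bsub>M\<^esub> x"
    "\<And>a x y. a\<in>carrier R \<Longrightarrow> x\<in>carrier M \<Longrightarrow> y\<in>carrier M \<Longrightarrow>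
        a \<odot>\<^bsub>M\<^esub> (x \<oplus>\<^bsub>M\<^esub> y) = a \<odot>\<^bsub>M\<^esub> x \<oplus>\<^bsub>M\<^esub> a \<odot>\<^bsub>M\<^esub> y"
    "\<And>a b x. a\<in>carrier R \<Longrightarrow> b\<in>carrier R \<Longrightarrow> x\<in>carrier M \<Longrightarrow>
        (a \<otimes>\<^bsub>R\<^esub> b) \<odot>\<^bsub>M\<^esub> x = a \<odot>\<^bsub>M\<^esub> (b \<odot>\<^bsub>M\<^esub> x)"
    "\<And>x. x\<in>carrier M \<Longrightarrow> \<one>\<^bsub>R\<^esub> \<odot>\<^bsub>M\<^esub> x = x"
  using assms unfolding left_module_def by auto

lemma lm_zero_r:
  assumes "left_module R M" "a \<in> carrier R"
  shows "a \<odot>\<^bsub>M\<^esub> \<zero>\<^bsub>M\<^esub> = \<zero>\<^bsub>M\<^esub>"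
proof -
  interpret M: abelian_group M using lmD[OF assms(1)] by simp
  have c: "a \<odot>\<^bsub>M\<^esub> \<zero>\<^bsub>M\<^esub> \<in> carrier M" using lmD(3)[OF assms(1) assms(2)] by simp
  have "a \<odot>\<^bsub>M\<^esub> \<zero>\<^bsub>M\<^esub> \<oplus>\<^bsub>M\<^esub> a \<odot>\<^bsub>M\<^esub> \<zero>\<^bsub>M\<^esub> = a \<odot>\<^bsub>M\<^esub> \<zero>\<^bsub>M\<^esub> \<oplus>\<^bsub>M\<^esub> \<zero>\<^bsub>M\<^esub>"
    using lmD(5)[OF assms(1) assms(2), of "\<zero>\<^bsub>M\<^esub>" "\<zero>\<^bsub>M\<^esub>"] c by simp
  then show ?thesis using c by (simp add: M.add.l_cancel_one)
qed

lemma lm_zero_l: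
  assumes "left_module R M" "x \<in> carrier M"
  shows "\<zero>\<^bsub>R\<^esub> \<odot>\<^bsub>M\<^esub> x = \<zero>\<^bsub>M\<^esub>"
proof -
  interpret M: abelian_group M using lmD[OF assms(1)] by simp
  interpret R: ring R using lmD[OF assms(1)] by simp
  have c: "\<zero>\<^bsub>R\<^esub> \<odot>\<^bsub>M\<^esub> x \<in> carrier M" using lmD(3)[OF assms(1) R.zero_closed assms(2)] by simp
  have "\<zero>\<^bsub>R\<^esub> \<odot>\<^bsub>M\<^esub> x \<oplus>\<^bsub>M\<^esub> \<zero>\<^bsub>R\<^esub> \<odot>\<^bsub>M\<^esub> x = \<zero>\<^bsub>R\<^esub> \<odot>\<^bsub>M\<^esub> x \<oplus>\<^bsub>M\<^esub> \<zero>\<^bsub>M\<^esub>"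
    using lmD(4)[OF assms(1) R.zero_closed R.zero_closed assms(2)] c by simp
  then show ?thesis using c by (simp add: M.add.l_cancel_one)
qed

lemma lm_minus:
  assumes "left_module R M" "a \<in> carrier R" "x \<in> carrier M" "y \<in> carrier M"
  shows "a \<odot>\<^bsub>M\<^esub> (x \<ominus>\<^bsub>M\<^esub> y) = a \<odot>\<^bsub>M\<^esub> x \<ominus>\<^bsub>M\<^esub> a \<odot>\<^bsub>M\<^esub> y"
proof -
  interpret M: abelian_group M using lmD[OF assms(1)] by simp
  have c1: "a \<odot>\<^bsub>M\<^esub> (\<ominus>\<^bsub>M\<^esub> y) \<in> carrier M" using lmD(3)[OF assms(1) assms(2)] assms by simp
  have c2: "a \<odot>\<^bsub>M\<^esub> y \<in> carrier M" using lmD(3)[OF assms(1) assms(2)] assms by simp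
  have "a \<odot>\<^bsub>M\<^esub> (\<ominus>\<^bsub>M\<^esub> y) \<oplus>\<^bsub>M\<^esub> a \<odot>\<^bsub>M\<^esub> y = \<zero>\<^bsub>M\<^esub>"
    using lmD(5)[OF assms(1) assms(2), of "\<ominus>\<^bsub>M\<^esub> y" y] assms lm_zero_r[OF assms(1,2)] by (simp add: M.l_neg)
  hence "a \<odot>\<^bsub>M\<^esub> (\<ominus>\<^bsub>M\<^esub> y) = \<ominus>\<^bsub>M\<^esub> (a \<odot>\<^bsub>M\<^esub> y)"
    using c1 c2 M.minus_equality by metis
  then show ?thesis
    using lmD(5)[OF assms(1) assms(2), of x "\<ominus>\<^bsub>M\<^esub> y"] assms by (simp add: M.minus_eq)
qed

lemma lin_homD:
  assumes "f \<in> lin_hom R M N"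
  shows "\<And>x. x \<in> carrier M \<Longrightarrow> f x \<in> carrier N"
    "\<And>x y. x \<in> carrier M \<Longrightarrow> y \<in> carrier M \<Longrightarrow> f (x \<oplus>\<^bsub>M\<^esub> y) = f x \<oplus>\<^bsub>N\<^esub> f y"
    "\<And>a x. a \<in> carrier R \<Longrightarrow> x \<in> carrier M \<Longrightarrow> f (a \<odot>\<^bsub>M\<^esub> x) = a \<odot>\<^bsub>N\<^esub> f x"
  using assms unfolding lin_hom_def by auto

lemma lin_hom_zero:
  assumes "f \<in> lin_hom R M N" "abelian_group M" "abelian_group N"
  shows "f \<zero>\<^bsub>M\<^esub> = \<zero>\<^bsub>N\<^esub>"
proof -
  interpret M: abelian_group M by fact
  interpret N: abelian_group N by fact
  have c: "f \<zero>\<^bsub>M\<^esub> \<in> carrier N" using lin_homD(1)[OF assms(1)] by simp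
  have "f \<zero>\<^bsub>M\<^esub> \<oplus>\<^bsub>N\<^esub> f \<zero>\<^bsub>M\<^esub> = f \<zero>\<^bsub>M\<^esub> \<oplus>\<^bsub>N\<^esub> \<zero>\<^bsub>N\<^esub>"
    using lin_homD(2)[OF assms(1), of "\<zero>\<^bsub>M\<^esub>" "\<zero>\<^bsub>M\<^esub>"] c by simp
  then show ?thesis using c by (simp add: N.add.l_cancel_one)
qed

lemma lin_hom_minus:
  assumes "f \<in> lin_hom R M N" "abelian_group M" "abelian_group N" "x \<in> carrier M" "y \<in> carrier M"
  shows "f (x \<ominus>\<^bsub>M\<^esub> y) = f x \<ominus>\<^bsub>N\<^esub> f y"
proof -
  interpret M: abelian_group M by fact
  interpret N: abelian_group N by fact
  have "f (\<ominus>\<^bsub>M\<^esub> y) \<oplus>\<^bsub>N\<^esub> f y = \<zero>\<^bsub>N\<^esub>"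
    using lin_homD(2)[OF assms(1), of "\<ominus>\<^bsub>M\<^esub> y" y] assms lin_hom_zero[OF assms(1-3)] by (simp add: M.l_neg)
  hence "f (\<ominus>\<^bsub>M\<^esub> y) = \<ominus>\<^bsub>N\<^esub> (f y)"
    using N.minus_equality lin_homD(1)[OF assms(1)] assms by simp
  then show ?thesis using lin_homD(2)[OF assms(1), of x "\<ominus>\<^bsub>M\<^esub> y"] assms by (simp add: M.minus_eq N.minus_eq)
qed

lemma free_mod_simps:
  "carrier (free_mod R n) = {v. (\<forall>i<n. v i \<in> carrier R) \<and> (\<forall>i\<ge>n. v i = \<zero>\<^bsub>R\<^esub>)}"
  "\<zero>\<^bsub>free_mod R n\<^esub> = (\<lambda>_. \<zero>\<^bsub>R\<^esub>)"
  "u \<oplus>\<^bsub>free_mod R n\<^esub> v = (\<lambda>i. if i < n then u i \<oplus>\<^bsub>R\<^esub> v i else \<zero>\<^bsub>R\<^esub>)"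
  "a \<odot>\<^bsub>free_mod R n\<^esub> v = (\<lambda>i. if i < n then a \<otimes>\<^bsub>R\<^esub> v i else \<zero>\<^bsub>R\<^esub>)"
  by (simp_all add: free_mod_def)

lemma free_mod_ag:
  assumes "ring R"
  shows "abelian_group (free_mod R n)"
proof -
  interpret R: ring R by fact
  show ?thesis
  proof (rule abelian_groupI)
    fix x assume x: "x \<in> carrier (free_mod R n)"
    show "\<exists>y\<in>carrier (free_mod R n). y \<oplus>\<^bsub>free_mod R n\<^esub> x = \<zero>\<^bsub>free_mod R n\<^esub>"
      by (rule bexI[of _ "\<lambda>i. if i < n then \<ominus>\<^bsub>R\<^esub> x i else \<zero>\<^bsub>R\<^esub>"])
         (use x in \<open>auto simp: free_mod_simps R.l_neg\<close>)
  qed (auto simp: free_mod_simps R.a_ac)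
qed

lemma free_mod_lm:
  assumes "ring R"
  shows "left_module R (free_mod R n)"
proof -
  interpret R: ring R by fact
  show ?thesis unfolding left_module_def
    using free_mod_ag[OF assms]
    by (auto simp: free_mod_simps R.l_distr R.r_distr R.m_assoc assms)
qed

lemma free_mod_fgp:
  assumes "ring R"
  shows "fg_projective R (free_mod R n)"
  unfolding fg_projective_def
  apply (intro conjI free_mod_lm[OF assms])
  apply (rule exI[of _ n], rule exI[of _ id], rule exI[of _ id])
  by (auto simp: lin_hom_def)


definition ins_at :: "('a,'c) ring_scheme \<Rightarrow> nat \<Rightarrow> (nat \<Rightarrow> 'a) \<Rightarrow> nat \<Rightarrow> 'a" where
  "ins_at R j w = (\<lambda>i. if i < j then w i else if i = j then \<zero>\<^bsub>R\<^esub> else w (i - 1))"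

definition del_at :: "('a,'c) ring_scheme \<Rightarrow> nat \<Rightarrow> nat \<Rightarrow> (nat \<Rightarrow> 'a) \<Rightarrow> nat \<Rightarrow> 'a" where
  "del_at R n j z = (\<lambda>i. if i < j then z i else if i < n then z (Suc i) else \<zero>\<^bsub>R\<^esub>)"

lemma free_val:
  assumes "ring R" "v \<in> carrier (free_mod R n)"
  shows "v i \<in> carrier R"
proof (cases "i < n")
  case True then show ?thesis using assms(2) by (simp add: free_mod_simps)
next
  case False then show ?thesis using assms ring.ring_simprules(2)[OF assms(1)] by (simp add: free_mod_simps)
qed

lemma basis_exists:
  assumes F: "field R" and M: "left_module R M"
  shows "f \<in> lin_hom R (free_mod R n) M \<Longrightarrow> f ` carrier (free_mod R n) = carrier M \<Longrightarrow>
    \<exists>m g. g \<in> lin_hom R (free_mod R m) M \<and> g ` carrier (free_mod R m) = carrier M \<and>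
      (\<forall>v \<in> carrier (free_mod R m). g v = \<zero>\<^bsub>M\<^esub> \<longrightarrow> v = (\<lambda>_. \<zero>\<^bsub>R\<^esub>))"
proof (induction n arbitrary: f)
  case 0
  then show ?case
    by (intro exI[of _ 0] exI[of _ f]) (auto simp: free_mod_simps)
next
  case (Suc n)
  interpret R: field R by fact
  interpret M: abelian_group M using lmD[OF M] by simp
  show ?case
  proof (cases "\<forall>v \<in> carrier (free_mod R (Suc n)). f v = \<zero>\<^bsub>M\<^esub> \<longrightarrow> v = (\<lambda>_. \<zero>\<^bsub>R\<^esub>)")
    case True
    then show ?thesis using Suc.prems by blast
  next
    case False
    then obtain v where v: "v \<in> carrier (free_mod R (Suc n))" "f v = \<zero>\<^bsub>M\<^esub>" "v \<noteq> (\<lambda>_. \<zero>\<^bsub>R\<^esub>)"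
      by blast
    then obtain j where j: "v j \<noteq> \<zero>\<^bsub>R\<^esub>" by auto
    have jn: "j < Suc n" using j v(1) by (auto simp: free_mod_simps) (meson not_less)
    have vc: "\<And>i. v i \<in> carrier R" using v(1) free_val[OF R.ring_axioms] by blast
    define g where "g = (\<lambda>w. f (ins_at R j w))"
    have ins_c: "ins_at R j w \<in> carrier (free_mod R (Suc n))" if "w \<in> carrier (free_mod R n)" for w
      using that jn by (auto simp: free_mod_simps ins_at_def)
    have fl: "f \<in> lin_hom R (free_mod R (Suc n)) M" by fact
    have g: "g \<in> lin_hom R (free_mod R n) M"
      unfolding lin_hom_def
    proof (intro CollectI conjI ballI)
      show "g \<in> carrier (free_mod R n) \<rightarrow> carrier M"
        using lin_homD(1)[OF fl] ins_c by (auto simp: g_def)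
    next
      fix x y assume x: "x \<in> carrier (free_mod R n)" and y: "y \<in> carrier (free_mod R n)"
      have "ins_at R j (x \<oplus>\<^bsub>free_mod R n\<^esub> y) = ins_at R j x \<oplus>\<^bsub>free_mod R (Suc n)\<^esub> ins_at R j y"
      proof (rule ext)
        fix i
        consider "i < j" | "i = j" | "i > j" by linarith
        then show "ins_at R j (x \<oplus>\<^bsub>free_mod R n\<^esub> y) i = (ins_at R j x \<oplus>\<^bsub>free_mod R (Suc n)\<^esub> ins_at R j y) i"
        proof cases
          case 1 then show ?thesis using jn by (simp add: free_mod_simps ins_at_def)
        next
          case 2 then show ?thesis using jn by (simp add: free_mod_simps ins_at_def)
        next
          case 3
          then have e: "(i - 1 < n) = (i < Suc n)" "\<not> i < j" "i \<noteq> j" by arith+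
          show ?thesis by (simp only: free_mod_simps ins_at_def e if_False)
        qed
      qed
      then show "g (x \<oplus>\<^bsub>free_mod R n\<^esub> y) = g x \<oplus>\<^bsub>M\<^esub> g y"
        using lin_homD(2)[OF fl] ins_c x y by (simp add: g_def)
    next
      fix a x assume a: "a \<in> carrier R" and x: "x \<in> carrier (free_mod R n)"
      have "ins_at R j (a \<odot>\<^bsub>free_mod R n\<^esub> x) = a \<odot>\<^bsub>free_mod R (Suc n)\<^esub> ins_at R j x"
      proof (rule ext)
        fix i
        consider "i < j" | "i = j" | "i > j" by linarith
        then show "ins_at R j (a \<odot>\<^bsub>free_mod R n\<^esub> x) i = (a \<odot>\<^bsub>free_mod R (Suc n)\<^esub> ins_at R j x) i"
        proof cases
          case 1 then show ?thesis using jn by (simp add: free_mod_simps ins_at_def)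
        next
          case 2 then show ?thesis using jn a by (simp add: free_mod_simps ins_at_def)
        next
          case 3
          then have e: "(i - 1 < n) = (i < Suc n)" "\<not> i < j" "i \<noteq> j" by arith+
          show ?thesis by (simp only: free_mod_simps ins_at_def e if_False)
        qed
      qed
      then show "g (a \<odot>\<^bsub>free_mod R n\<^esub> x) = a \<odot>\<^bsub>M\<^esub> g x"
        using lin_homD(3)[OF fl] ins_c x a by (simp add: g_def)
    qed
    have gs: "g ` carrier (free_mod R n) = carrier M"
    proof
      show "g ` carrier (free_mod R n) \<subseteq> carrier M" using lin_homD(1)[OF g] by blast
    next
      show "carrier M \<subseteq> g ` carrier (free_mod R n)"
      proof
        fix m assume "m \<in> carrier M"
        then obtain w where w: "w \<in> carrier (free_mod R (Suc n))" "f w = m" using Suc.prems(2) by (metis imageE)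
        have wc: "\<And>i. w i \<in> carrier R" using w(1) free_val[OF R.ring_axioms] by blast
        have vinv: "inv\<^bsub>R\<^esub> (v j) \<in> carrier R" "inv\<^bsub>R\<^esub> (v j) \<otimes>\<^bsub>R\<^esub> v j = \<one>\<^bsub>R\<^esub>"
          using j vc R.field_Units by auto
        define c where "c = inv\<^bsub>R\<^esub> (v j) \<otimes>\<^bsub>R\<^esub> w j"
        have cc: "c \<in> carrier R" using vinv wc by (simp add: c_def)
        define z where "z = w \<oplus>\<^bsub>free_mod R (Suc n)\<^esub> ((\<ominus>\<^bsub>R\<^esub> c) \<odot>\<^bsub>free_mod R (Suc n)\<^esub> v)"
        have sc: "(\<ominus>\<^bsub>R\<^esub> c) \<odot>\<^bsub>free_mod R (Suc n)\<^esub> v \<in> carrier (free_mod R (Suc n))"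
          using lmD(3)[OF free_mod_lm[OF R.ring_axioms] R.a_inv_closed[OF cc] v(1)] .
        have zc: "z \<in> carrier (free_mod R (Suc n))"
        proof -
          interpret F: abelian_group "free_mod R (Suc n)" using free_mod_ag[OF R.ring_axioms] .
          show ?thesis unfolding z_def using F.a_closed[OF w(1) sc] .
        qed
        have fz: "f z = m"
        proof -
          have "f z = f w \<oplus>\<^bsub>M\<^esub> (\<ominus>\<^bsub>R\<^esub> c) \<odot>\<^bsub>M\<^esub> f v"
            unfolding z_def using lin_homD(2)[OF fl w(1) sc] lin_homD(3)[OF fl R.a_inv_closed[OF cc] v(1)] by simp
          also have "\<dots> = m" using v(2) w lm_zero_r[OF M R.a_inv_closed[OF cc]] lin_homD(1)[OF fl w(1)] by simp
          finally show ?thesis .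
        qed
        have zj: "z j = \<zero>\<^bsub>R\<^esub>"
        proof -
          have "z j = w j \<oplus>\<^bsub>R\<^esub> (\<ominus>\<^bsub>R\<^esub> c \<otimes>\<^bsub>R\<^esub> v j)" using jn by (simp add: z_def free_mod_simps)
          also have "c \<otimes>\<^bsub>R\<^esub> v j = w j"
          proof -
            have "c \<otimes>\<^bsub>R\<^esub> v j = inv\<^bsub>R\<^esub> (v j) \<otimes>\<^bsub>R\<^esub> (w j \<otimes>\<^bsub>R\<^esub> v j)"
              unfolding c_def using vinv wc vc by (simp add: R.m_assoc)
            also have "\<dots> = inv\<^bsub>R\<^esub> (v j) \<otimes>\<^bsub>R\<^esub> (v j \<otimes>\<^bsub>R\<^esub> w j)"
              using wc vc by (simp add: R.m_comm[of "w j"])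
            also have "\<dots> = w j" using vinv wc vc by (simp add: R.m_assoc[symmetric])
            finally show ?thesis .
          qed
          hence "\<ominus>\<^bsub>R\<^esub> c \<otimes>\<^bsub>R\<^esub> v j = \<ominus>\<^bsub>R\<^esub> w j" using cc vc by (simp add: R.l_minus)
          finally show ?thesis using wc by (simp add: R.r_neg)
        qed
        have dc: "del_at R n j z \<in> carrier (free_mod R n)"
          using zc jn by (auto simp: free_mod_simps del_at_def)
        have "ins_at R j (del_at R n j z) = z"
        proof
          fix i
          consider "i < j" | "i = j" | "i > j \<and> i < Suc n" | "i \<ge> Suc n" by linarith
          then show "ins_at R j (del_at R n j z) i = z i"
          proof cases
            case 1 then show ?thesis by (simp add: ins_at_def del_at_def)
          next
            case 2 then show ?thesis using zj by (simp add: ins_at_def del_at_def)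
          next
            case 3 then have e: "\<not> i < j" "i \<noteq> j" "\<not> i - 1 < j" "i - 1 < n" "Suc (i - 1) = i" by arith+
            show ?thesis by (simp only: ins_at_def del_at_def e if_False if_True)
          next
            case 4 then have e: "\<not> i < j" "i \<noteq> j" "\<not> i - 1 < j" "\<not> i - 1 < n" using jn by arith+
            have "z i = \<zero>\<^bsub>R\<^esub>" using zc 4 by (simp add: free_mod_simps)
            then show ?thesis by (simp only: ins_at_def del_at_def e if_False)
          qed
        qed
        then show "m \<in> g ` carrier (free_mod R n)"
          using dc fz by (auto simp: g_def intro!: image_eqI[of _ _ "del_at R n j z"])
      qed
    qed
    show ?thesis using Suc.IH[OF g gs] .
  qed
qed

lemma finite_chain_stable:
  assumes "finite C" "\<And>n. I n \<subseteq> C" "\<And>n. I n \<subseteq> I (Suc n)"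
  shows "\<exists>N. \<forall>n\<ge>N. I n = I N"
proof -
  have mono: "I m \<subseteq> I n" if "m \<le> n" for m n
    using lift_Suc_mono_le[of I, OF assms(3) that] .
  have fin: "finite (range (\<lambda>n. card (I n)))"
    by (rule finite_subset[of _ "{..card C}"]) (auto intro: card_mono[OF assms(1) assms(2)])
  obtain N where N: "card (I N) = Max (range (\<lambda>n. card (I n)))"
    using Max_in[OF fin] by auto
  have "I n = I N" if "n \<ge> N" for n
  proof -
    have "card (I n) \<le> card (I N)" using N fin by simp
    moreover have "finite (I n)" using assms(1,2) finite_subset by blast
    ultimately show ?thesis using mono[OF that] card_subset_eq by (metis antisym card_mono)
  qed
  then show ?thesis by blast
qed

lemma field_regular:
  assumes F: "field R" and fin: "finite (carrier R)"
  shows "regular_ring R"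
proof -
  interpret R: field R by fact
  have noeth: "noetherian_ring R"
    unfolding noetherian_ring_def
  proof (intro conjI allI impI)
    show "ring R" by (rule R.ring_axioms)
    fix I :: "nat \<Rightarrow> _" assume a: "(\<forall>n. left_ideal R (I n)) \<and> (\<forall>n. I n \<subseteq> I (Suc n))"
    have "\<And>n. I n \<subseteq> carrier R" using a by (simp add: left_ideal_def)
    then show "\<exists>N. \<forall>n\<ge>N. I n = I N"
      using finite_chain_stable[OF fin, of I] a by blast
  qed
  have res: "has_fin_proj_res R M" if fg: "fin_generated R M" for M :: "('a, (nat \<Rightarrow> 'a) set) module"
  proof -
    have M: "left_module R M" using fg by (simp add: fin_generated_def)
    interpret M: abelian_group M using lmD[OF M] by simp
    obtain n f where f: "f \<in> lin_hom R (free_mod R n) M" "f ` carrier (free_mod R n) = carrier M"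
      using fg unfolding fin_generated_def by blast
    obtain m g where g: "g \<in> lin_hom R (free_mod R m) M" "g ` carrier (free_mod R m) = carrier M"
      "\<forall>v \<in> carrier (free_mod R m). g v = \<zero>\<^bsub>M\<^esub> \<longrightarrow> v = (\<lambda>_. \<zero>\<^bsub>R\<^esub>)"
      using basis_exists[OF F M f] by blast
    define P :: "nat \<Rightarrow> ('a, nat \<Rightarrow> 'a) module" where
      "P = (\<lambda>i. if i = 0 then free_mod R m else free_mod R 0)"
    define d :: "nat \<Rightarrow> (nat \<Rightarrow> 'a) \<Rightarrow> nat \<Rightarrow> 'a" where "d = (\<lambda>i _ _. \<zero>\<^bsub>R\<^esub>)"
    have c0: "carrier (free_mod R 0) = {\<lambda>_. \<zero>\<^bsub>R\<^esub>}" by (auto simp: free_mod_simps)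
    have g0: "g (\<lambda>_. \<zero>\<^bsub>R\<^esub>) = \<zero>\<^bsub>M\<^esub>"
      using lin_hom_zero[OF g(1) free_mod_ag[OF R.ring_axioms] M.abelian_group_axioms]
      by (simp add: free_mod_simps)
    have dl: "d i \<in> lin_hom R (P (Suc i)) (P i)" for i
      by (auto simp: lin_hom_def d_def P_def free_mod_simps)
    show ?thesis unfolding has_fin_proj_res_def
      apply (rule exI[of _ P], rule exI[of _ d], rule exI[of _ g], rule exI[of _ 0])
      apply (intro conjI allI impI)
      subgoal for i by (simp add: P_def free_mod_fgp[OF R.ring_axioms])
      subgoal for i using c0 by (simp add: P_def free_mod_simps)
      subgoal for i by (rule dl)
      subgoal using g(1) by (simp add: P_def)
      subgoal using g(2) by (simp add: P_def)
      subgoal using g(3) g0 by (auto simp: P_def lin_kernel_def d_def c0 free_mod_simps)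
      subgoal for i by (auto simp: P_def lin_kernel_def d_def c0 free_mod_simps)
      done
  qed
  show ?thesis unfolding regular_ring_def using noeth res by blast
qed


lemma exists_fp:
  fixes p :: nat
  assumes inf: "infinite (UNIV :: 'r set)" and pp: "prime p"
  shows "\<exists>S :: 'r ring. field S \<and> finite (carrier S) \<and> add_pow S p \<one>\<^bsub>S\<^esub> = \<zero>\<^bsub>S\<^esub>"
proof -
  define Z where "Z = residue_ring (int p)"
  have rp: "residues_prime p" using pp by (simp add: residues_prime_def)
  have FZ: "field Z" unfolding Z_def using residues_prime.is_field[OF rp] .
  interpret Z: field Z by (rule FZ)
  have p1: "p > 1" using pp prime_gt_1_nat by blast
  have cZ: "carrier Z = {0..int p - 1}" by (simp add: Z_def residue_ring_def)
  obtain \<phi> :: "nat \<Rightarrow> 'r" where \<phi>: "inj \<phi>" using infinite_countable_subset[OF inf] by blast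
  define \<psi> where "\<psi> = (\<lambda>x::int. \<phi> (nat x))"
  have injpsi: "inj_on \<psi> (carrier Z)"
    unfolding inj_on_def \<psi>_def cZ using \<phi> by (auto simp: inj_def) (metis eq_nat_nat_iff)
  define iv where "iv = inv_into (carrier Z) \<psi>"
  have iv: "\<And>x. x \<in> carrier Z \<Longrightarrow> iv (\<psi> x) = x" unfolding iv_def using injpsi by (simp add: inv_into_f_f)
  define S :: "'r ring" where "S = \<lparr>carrier = \<psi> ` carrier Z,
      monoid.mult = (\<lambda>a b. \<psi> (iv a \<otimes>\<^bsub>Z\<^esub> iv b)), one = \<psi> \<one>\<^bsub>Z\<^esub>, zero = \<psi> \<zero>\<^bsub>Z\<^esub>,
      add = (\<lambda>a b. \<psi> (iv a \<oplus>\<^bsub>Z\<^esub> iv b))\<rparr>"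
  have iso: "\<psi> \<in> ring_iso Z S"
    by (rule ring_iso_memI) (auto simp: S_def iv injpsi bij_betw_def)
  have "field (S\<lparr>zero := \<psi> \<zero>\<^bsub>Z\<^esub>\<rparr>)" by (rule Z.ring_iso_imp_img_field[OF iso])
  moreover have "S\<lparr>zero := \<psi> \<zero>\<^bsub>Z\<^esub>\<rparr> = S" by (simp add: S_def)
  ultimately have FS: "field S" by simp
  interpret S: field S by (rule FS)
  have cZ': "\<And>n. int n mod int p \<in> carrier Z" using p1 by (simp add: cZ)
  have ap: "add_pow S n \<one>\<^bsub>S\<^esub> = \<psi> (int n mod int p)" for n
  proof (induction n)
    case 0
    have "add_pow S (0::nat) \<one>\<^bsub>S\<^esub> = \<zero>\<^bsub>S\<^esub>" by simp
    then show ?case by (simp add: S_def Z_def residue_ring_def)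
  next
    case (Suc n)
    have "add_pow S (Suc n) \<one>\<^bsub>S\<^esub> = add_pow S n \<one>\<^bsub>S\<^esub> \<oplus>\<^bsub>S\<^esub> \<one>\<^bsub>S\<^esub>" by simp
    also have "\<dots> = \<psi> ((int n mod int p + 1) mod int p)"
      using Suc cZ' Z.one_closed by (simp add: S_def iv) (simp add: Z_def residue_ring_def)
    also have "(int n mod int p + 1) mod int p = int (Suc n) mod int p" by (metis mod_add_left_eq of_nat_Suc add.commute)
    finally show ?case .
  qed
  have "add_pow S p \<one>\<^bsub>S\<^esub> = \<zero>\<^bsub>S\<^esub>" using ap[of p] by (simp add: S_def Z_def residue_ring_def)
  moreover have "finite (carrier S)" by (simp add: S_def cZ)
  ultimately show ?thesis using FS by blast
qed


locale tor = G: group G + R: ring R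
  for G :: "'g monoid" and R :: "'r ring" +
  fixes h :: 'g and p :: nat
  assumes h_in: "h \<in> carrier G" and p2: "2 \<le> p" and hp: "h [^]\<^bsub>G\<^esub> p = \<one>\<^bsub>G\<^esub>"
    and hinj: "inj_on (\<lambda>i. h [^]\<^bsub>G\<^esub> i) {..<p}"
    and char: "add_pow R p \<one>\<^bsub>R\<^esub> = \<zero>\<^bsub>R\<^esub>" and one_ne: "\<one>\<^bsub>R\<^esub> \<noteq> \<zero>\<^bsub>R\<^esub>"
begin

definition H where "H = (\<lambda>i. h [^]\<^bsub>G\<^esub> i) ` {..<p}"
definition orb where "orb x = (\<lambda>z. z \<otimes>\<^bsub>G\<^esub> x) ` H"
definition rep where "rep x = (SOME t. t \<in> orb x)"
definition ex where "ex x = (THE j. j < p \<and> x = h [^]\<^bsub>G\<^esub> j \<otimes>\<^bsub>G\<^esub> rep x)"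

lemma hpow_closed[simp]: "h [^]\<^bsub>G\<^esub> (i::nat) \<in> carrier G"
  using h_in by simp

lemma hpow_mod: "h [^]\<^bsub>G\<^esub> (n::nat) = h [^]\<^bsub>G\<^esub> (n mod p)"
proof -
  have "h [^]\<^bsub>G\<^esub> n = h [^]\<^bsub>G\<^esub> (p * (n div p) + n mod p)" by simp
  also have "\<dots> = h [^]\<^bsub>G\<^esub> (p * (n div p)) \<otimes>\<^bsub>G\<^esub> h [^]\<^bsub>G\<^esub> (n mod p)"
    by (simp add: G.nat_pow_mult h_in)
  also have "h [^]\<^bsub>G\<^esub> (p * (n div p)) = \<one>\<^bsub>G\<^esub>"
    by (simp add: G.nat_pow_pow[OF h_in, symmetric] hp)
  finally show ?thesis by simp
qed

lemma H_sub: "H \<subseteq> carrier G" unfolding H_def by auto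
lemma H_fin: "finite H" unfolding H_def by simp
lemma H_card: "card H = p" unfolding H_def using card_image[OF hinj] by simp
lemma pow_H: "h [^]\<^bsub>G\<^esub> (n::nat) \<in> H"
proof -
  have "n mod p < p" using p2 by simp
  then show ?thesis unfolding H_def by (subst hpow_mod) blast
qed
lemma one_H: "\<one>\<^bsub>G\<^esub> \<in> H" using pow_H[of 0] by simp
lemma h_H: "h \<in> H" using pow_H[of 1] h_in by simp
lemma H_G: "y \<in> H \<Longrightarrow> y \<in> carrier G" using H_sub by blast

lemma H_mult: assumes "y \<in> H" "z \<in> H" shows "y \<otimes>\<^bsub>G\<^esub> z \<in> H"
proof -
  obtain i j where "y = h [^]\<^bsub>G\<^esub> (i::nat)" "z = h [^]\<^bsub>G\<^esub> (j::nat)" using assms unfolding H_def by blast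
  then show ?thesis using pow_H by (simp add: G.nat_pow_mult h_in)
qed

lemma inv_hpow: "i \<le> p \<Longrightarrow> inv\<^bsub>G\<^esub> (h [^]\<^bsub>G\<^esub> i) = h [^]\<^bsub>G\<^esub> (p - i)"
  by (rule G.inv_equality) (auto simp: G.nat_pow_mult h_in hp)

lemma H_inv: assumes "y \<in> H" shows "inv\<^bsub>G\<^esub> y \<in> H"
proof -
  obtain i where "y = h [^]\<^bsub>G\<^esub> (i::nat)" "i < p" using assms unfolding H_def by blast
  then show ?thesis using pow_H inv_hpow[of i] by simp
qed

lemma h_ne: "h \<noteq> \<one>\<^bsub>G\<^esub>"
proof
  assume "h = \<one>\<^bsub>G\<^esub>"
  then have "h [^]\<^bsub>G\<^esub> (0::nat) = h [^]\<^bsub>G\<^esub> (1::nat)" using h_in by simp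
  moreover have "(0::nat) \<in> {..<p}" "(1::nat) \<in> {..<p}" using p2 by auto
  ultimately show False using hinj unfolding inj_on_def by (metis zero_neq_one)
qed

lemma invh: "inv\<^bsub>G\<^esub> h = h [^]\<^bsub>G\<^esub> (p - 1)"
  using inv_hpow[of 1] p2 h_in by simp

lemma invh_H: "inv\<^bsub>G\<^esub> h \<in> H" using H_inv h_H by blast

lemma orb_sub: "x \<in> carrier G \<Longrightarrow> orb x \<subseteq> carrier G"
  unfolding orb_def using H_G by auto

lemma self_orb: "x \<in> carrier G \<Longrightarrow> x \<in> orb x"
  unfolding orb_def using one_H by force

lemma orb_memI: "z \<in> H \<Longrightarrow> z \<otimes>\<^bsub>G\<^esub> x \<in> orb x"
  unfolding orb_def by blast

lemma orb_eq:
  assumes x: "x \<in> carrier G" and y: "y \<in> orb x"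
  shows "orb y = orb x"
proof -
  obtain z where z: "z \<in> H" "y = z \<otimes>\<^bsub>G\<^esub> x" using y unfolding orb_def by blast
  have zG: "z \<in> carrier G" using H_G z by blast
  show ?thesis
  proof
    show "orb y \<subseteq> orb x"
    proof
      fix w assume "w \<in> orb y"
      then obtain v where v: "v \<in> H" "w = v \<otimes>\<^bsub>G\<^esub> y" unfolding orb_def by blast
      have "w = (v \<otimes>\<^bsub>G\<^esub> z) \<otimes>\<^bsub>G\<^esub> x" using v z zG x H_G by (simp add: G.m_assoc)
      then show "w \<in> orb x" using H_mult v z orb_memI by metis
    qed
  next
    show "orb x \<subseteq> orb y"
    proof
      fix w assume "w \<in> orb x"
      then obtain v where v: "v \<in> H" "w = v \<otimes>\<^bsub>G\<^esub> x" unfolding orb_def by blast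
      have vG: "v \<in> carrier G" using H_G v by blast
      have "inv\<^bsub>G\<^esub> z \<otimes>\<^bsub>G\<^esub> (z \<otimes>\<^bsub>G\<^esub> x) = x" using zG x by (simp add: G.m_assoc[symmetric])
      then have "w = (v \<otimes>\<^bsub>G\<^esub> inv\<^bsub>G\<^esub> z) \<otimes>\<^bsub>G\<^esub> y" using v z zG x vG by (simp add: G.m_assoc)
      moreover have "v \<otimes>\<^bsub>G\<^esub> inv\<^bsub>G\<^esub> z \<in> H" using H_mult H_inv v z by blast
      ultimately show "w \<in> orb y" using orb_memI by metis
    qed
  qed
qed

lemma rep_orb: "x \<in> carrier G \<Longrightarrow> rep x \<in> orb x"
  unfolding rep_def using self_orb by (rule someI)

lemma rep_G: "x \<in> carrier G \<Longrightarrow> rep x \<in> carrier G"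
  using rep_orb orb_sub by blast

lemma rep_eq: "x \<in> carrier G \<Longrightarrow> y \<in> orb x \<Longrightarrow> rep y = rep x"
  unfolding rep_def using orb_eq by simp

lemma orb_rep: "x \<in> carrier G \<Longrightarrow> orb (rep x) = orb x"
  using orb_eq rep_orb by blast

lemma rep_rep: "x \<in> carrier G \<Longrightarrow> rep (rep x) = rep x"
  using rep_eq rep_orb by blast

lemma in_orb_rep: "x \<in> carrier G \<Longrightarrow> x \<in> orb (rep x)"
  using orb_rep self_orb by blast

lemma ex_exists: assumes x: "x \<in> carrier G" shows "\<exists>j<p. x = h [^]\<^bsub>G\<^esub> j \<otimes>\<^bsub>G\<^esub> rep x"
proof -
  obtain z where "z \<in> H" "x = z \<otimes>\<^bsub>G\<^esub> rep x" using in_orb_rep[OF x] unfolding orb_def by blast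
  then show ?thesis unfolding H_def by blast
qed

lemma ex_uniq:
  assumes "t \<in> carrier G" "j < p" "j' < p" "h [^]\<^bsub>G\<^esub> j \<otimes>\<^bsub>G\<^esub> t = h [^]\<^bsub>G\<^esub> j' \<otimes>\<^bsub>G\<^esub> t"
  shows "j = j'"
proof -
  have "h [^]\<^bsub>G\<^esub> j = h [^]\<^bsub>G\<^esub> j'" using assms G.right_cancel by simp
  then show ?thesis using hinj assms unfolding inj_on_def by blast
qed

lemma ex_prop: assumes x: "x \<in> carrier G" shows "ex x < p" "x = h [^]\<^bsub>G\<^esub> (ex x) \<otimes>\<^bsub>G\<^esub> rep x"
proof -
  have "\<exists>!j. j < p \<and> x = h [^]\<^bsub>G\<^esub> j \<otimes>\<^bsub>G\<^esub> rep x"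
    using ex_exists[OF x] ex_uniq[OF rep_G[OF x]] by metis
  then have "ex x < p \<and> x = h [^]\<^bsub>G\<^esub> (ex x) \<otimes>\<^bsub>G\<^esub> rep x" unfolding ex_def by (rule theI')
  then show "ex x < p" "x = h [^]\<^bsub>G\<^esub> (ex x) \<otimes>\<^bsub>G\<^esub> rep x" by auto
qed

lemma ex_eqI: "x \<in> carrier G \<Longrightarrow> j < p \<Longrightarrow> x = h [^]\<^bsub>G\<^esub> j \<otimes>\<^bsub>G\<^esub> rep x \<Longrightarrow> ex x = j"
  using ex_prop ex_uniq rep_G by metis

lemma invh_x_G: "x \<in> carrier G \<Longrightarrow> inv\<^bsub>G\<^esub> h \<otimes>\<^bsub>G\<^esub> x \<in> carrier G"
  using h_in by simp

lemma rep_invh: "x \<in> carrier G \<Longrightarrow> rep (inv\<^bsub>G\<^esub> h \<otimes>\<^bsub>G\<^esub> x) = rep x"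
  using rep_eq orb_memI invh_H by blast

lemma ex_invh:
  assumes x: "x \<in> carrier G"
  shows "ex (inv\<^bsub>G\<^esub> h \<otimes>\<^bsub>G\<^esub> x) = (if ex x = 0 then p - 1 else ex x - 1)"
proof -
  define t where "t = rep x"
  have tG: "t \<in> carrier G" using rep_G[OF x] t_def by simp
  have r: "rep (inv\<^bsub>G\<^esub> h \<otimes>\<^bsub>G\<^esub> x) = t" using rep_invh[OF x] t_def by simp
  show ?thesis
  proof (cases "ex x")
    case 0
    then have "x = t" using ex_prop[OF x] tG t_def by simp
    then have "inv\<^bsub>G\<^esub> h \<otimes>\<^bsub>G\<^esub> x = h [^]\<^bsub>G\<^esub> (p - 1) \<otimes>\<^bsub>G\<^esub> rep (inv\<^bsub>G\<^esub> h \<otimes>\<^bsub>G\<^esub> x)"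
      using r invh by simp
    then show ?thesis using ex_eqI[OF invh_x_G[OF x]] 0 p2 by simp
  next
    case (Suc k)
    then have e: "x = h [^]\<^bsub>G\<^esub> (Suc k) \<otimes>\<^bsub>G\<^esub> t" using ex_prop[OF x] t_def by simp
    have "x = (h \<otimes>\<^bsub>G\<^esub> h [^]\<^bsub>G\<^esub> k) \<otimes>\<^bsub>G\<^esub> t"
      by (subst e, subst G.nat_pow_Suc2[OF h_in]) (rule refl)
    then have "inv\<^bsub>G\<^esub> h \<otimes>\<^bsub>G\<^esub> x = h [^]\<^bsub>G\<^esub> k \<otimes>\<^bsub>G\<^esub> rep (inv\<^bsub>G\<^esub> h \<otimes>\<^bsub>G\<^esub> x)"
      using r h_in tG by (simp add: G.m_assoc[symmetric] del: G.nat_pow_Suc)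
    moreover have "k < p" using Suc ex_prop[OF x] by simp
    ultimately show ?thesis using ex_eqI[OF invh_x_G[OF x]] Suc by simp
  qed
qed

end


context tor begin

lemma minus_zero_eq: "x \<in> carrier R \<Longrightarrow> y \<in> carrier R \<Longrightarrow> x \<ominus>\<^bsub>R\<^esub> y = \<zero>\<^bsub>R\<^esub> \<Longrightarrow> x = y"
  using R.add.inv_solve_right'[of "\<zero>\<^bsub>R\<^esub>" x y] by (simp add: R.minus_eq)

lemma neg_one_ne: "\<ominus>\<^bsub>R\<^esub> \<one>\<^bsub>R\<^esub> \<noteq> \<zero>\<^bsub>R\<^esub>"
proof
  assume "\<ominus>\<^bsub>R\<^esub> \<one>\<^bsub>R\<^esub> = \<zero>\<^bsub>R\<^esub>"
  then have "\<ominus>\<^bsub>R\<^esub> (\<ominus>\<^bsub>R\<^esub> \<one>\<^bsub>R\<^esub>) = \<zero>\<^bsub>R\<^esub>" by simp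
  then show False using one_ne by simp
qed

lemma fs_swap:
  assumes "finite A" "finite B" "\<And>x y. x \<in> A \<Longrightarrow> y \<in> B \<Longrightarrow> F x y \<in> carrier R"
  shows "finsum R (\<lambda>x. finsum R (\<lambda>y. F x y) B) A = finsum R (\<lambda>y. finsum R (\<lambda>x. F x y) A) B"
  using assms(1,3)
proof (induction A rule: finite_induct)
  case empty
  then show ?case by (simp add: R.finsum_zero)
next
  case (insert a A)
  have "finsum R (\<lambda>x. finsum R (\<lambda>y. F x y) B) (insert a A)
      = finsum R (\<lambda>y. F a y) B \<oplus>\<^bsub>R\<^esub> finsum R (\<lambda>x. finsum R (\<lambda>y. F x y) B) A"
    using insert assms(2) by (intro R.finsum_insert) (auto intro!: R.finsum_closed)
  also have "finsum R (\<lambda>x. finsum R (\<lambda>y. F x y) B) A = finsum R (\<lambda>y. finsum R (\<lambda>x. F x y) A) B"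
    using insert.IH insert.prems by blast
  also have "finsum R (\<lambda>y. F a y) B \<oplus>\<^bsub>R\<^esub> finsum R (\<lambda>y. finsum R (\<lambda>x. F x y) A) B
     = finsum R (\<lambda>y. F a y \<oplus>\<^bsub>R\<^esub> finsum R (\<lambda>x. F x y) A) B"
    using insert assms(2) by (intro R.finsum_addf[symmetric]) (auto intro!: R.finsum_closed)
  also have "\<dots> = finsum R (\<lambda>y. finsum R (\<lambda>x. F x y) (insert a A)) B"
    using insert assms(2) by (intro R.finsum_cong') (auto intro!: R.finsum_closed simp: R.finsum_insert)
  finally show ?case .
qed

definition A where "A = group_ring R G"
definition u where "u = (\<lambda>x. if x = h then \<one>\<^bsub>R\<^esub> else if x = \<one>\<^bsub>G\<^esub> then \<ominus>\<^bsub>R\<^esub> \<one>\<^bsub>R\<^esub> else \<zero>\<^bsub>R\<^esub>)"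
definition N where "N = (\<lambda>x. if x \<in> H then \<one>\<^bsub>R\<^esub> else \<zero>\<^bsub>R\<^esub>)"
definition supp where "supp f = {x \<in> carrier G. f x \<noteq> \<zero>\<^bsub>R\<^esub>}"
definition eps where "eps f = finsum R f (supp f)"

lemma A_carrier: "carrier A = {f. (\<forall>x\<in>carrier G. f x \<in> carrier R) \<and> (\<forall>x. x \<notin> carrier G \<longrightarrow> f x = \<zero>\<^bsub>R\<^esub>)
                    \<and> finite {x. f x \<noteq> \<zero>\<^bsub>R\<^esub>}}"
  by (simp add: A_def group_ring_def)

lemma A_mult: "f \<otimes>\<^bsub>A\<^esub> g = (\<lambda>x. if x \<in> carrier G
                 then finsum R (\<lambda>y. f y \<otimes>\<^bsub>R\<^esub> g (inv\<^bsub>G\<^esub> y \<otimes>\<^bsub>G\<^esub> x)) {y \<in> carrier G. f y \<noteq> \<zero>\<^bsub>R\<^esub>}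
                 else \<zero>\<^bsub>R\<^esub>)"
  by (simp add: A_def group_ring_def)

lemma A_add: "f \<oplus>\<^bsub>A\<^esub> g = (\<lambda>x. if x \<in> carrier G then f x \<oplus>\<^bsub>R\<^esub> g x else \<zero>\<^bsub>R\<^esub>)"
  by (simp add: A_def group_ring_def)

lemma A_zero: "\<zero>\<^bsub>A\<^esub> = (\<lambda>_. \<zero>\<^bsub>R\<^esub>)"
  by (simp add: A_def group_ring_def)

lemma A_one: "\<one>\<^bsub>A\<^esub> = (\<lambda>x. if x = \<one>\<^bsub>G\<^esub> then \<one>\<^bsub>R\<^esub> else \<zero>\<^bsub>R\<^esub>)"
  by (simp add: A_def group_ring_def)

lemma A_val: "f \<in> carrier A \<Longrightarrow> f x \<in> carrier R"
  by (cases "x \<in> carrier G") (auto simp: A_carrier)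

lemma A_out: "f \<in> carrier A \<Longrightarrow> x \<notin> carrier G \<Longrightarrow> f x = \<zero>\<^bsub>R\<^esub>"
  by (auto simp: A_carrier)

lemma A_fin: "f \<in> carrier A \<Longrightarrow> finite {x. f x \<noteq> \<zero>\<^bsub>R\<^esub>}"
  by (auto simp: A_carrier)

lemma supp_fin: "f \<in> carrier A \<Longrightarrow> finite (supp f)"
  unfolding supp_def by (rule finite_subset[OF _ A_fin]) auto

lemma u_A: "u \<in> carrier A"
proof -
  have "{x. u x \<noteq> \<zero>\<^bsub>R\<^esub>} \<subseteq> {h, \<one>\<^bsub>G\<^esub>}" by (auto simp: u_def)
  then show ?thesis unfolding A_carrier using h_in by (auto simp: u_def intro: finite_subset)
qed

lemma N_A: "N \<in> carrier A"
proof -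
  have "{x. N x \<noteq> \<zero>\<^bsub>R\<^esub>} \<subseteq> H" by (auto simp: N_def)
  then show ?thesis unfolding A_carrier using H_G H_fin by (auto simp: N_def intro: finite_subset)
qed

lemma u_supp: "{y \<in> carrier G. u y \<noteq> \<zero>\<^bsub>R\<^esub>} = {h, \<one>\<^bsub>G\<^esub>}"
  using h_in h_ne one_ne neg_one_ne by (auto simp: u_def)

lemma N_supp: "{y \<in> carrier G. N y \<noteq> \<zero>\<^bsub>R\<^esub>} = H"
  using H_G one_ne by (auto simp: N_def)

lemma u_mult:
  assumes g: "g \<in> carrier A"
  shows "u \<otimes>\<^bsub>A\<^esub> g = (\<lambda>x. if x \<in> carrier G then g (inv\<^bsub>G\<^esub> h \<otimes>\<^bsub>G\<^esub> x) \<ominus>\<^bsub>R\<^esub> g x else \<zero>\<^bsub>R\<^esub>)"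
proof (rule ext)
  fix x
  show "(u \<otimes>\<^bsub>A\<^esub> g) x = (if x \<in> carrier G then g (inv\<^bsub>G\<^esub> h \<otimes>\<^bsub>G\<^esub> x) \<ominus>\<^bsub>R\<^esub> g x else \<zero>\<^bsub>R\<^esub>)"
  proof (cases "x \<in> carrier G")
    case True
    have gv: "\<And>y. g y \<in> carrier R" using A_val[OF g] .
    have "(u \<otimes>\<^bsub>A\<^esub> g) x = finsum R (\<lambda>y. u y \<otimes>\<^bsub>R\<^esub> g (inv\<^bsub>G\<^esub> y \<otimes>\<^bsub>G\<^esub> x)) {h, \<one>\<^bsub>G\<^esub>}"
      using True by (simp add: A_mult u_supp)
    also have "\<dots> = u h \<otimes>\<^bsub>R\<^esub> g (inv\<^bsub>G\<^esub> h \<otimes>\<^bsub>G\<^esub> x) \<oplus>\<^bsub>R\<^esub> u \<one>\<^bsub>G\<^esub> \<otimes>\<^bsub>R\<^esub> g (inv\<^bsub>G\<^esub> \<one>\<^bsub>G\<^esub> \<otimes>\<^bsub>G\<^esub> x)"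
      using h_ne gv by (simp add: R.finsum_insert u_def)
    also have "\<dots> = g (inv\<^bsub>G\<^esub> h \<otimes>\<^bsub>G\<^esub> x) \<ominus>\<^bsub>R\<^esub> g x"
      using h_ne gv True by (simp add: u_def R.l_minus R.minus_eq)
    finally show ?thesis using True by simp
  next
    case False then show ?thesis by (simp add: A_mult)
  qed
qed

lemma N_mult:
  assumes g: "g \<in> carrier A"
  shows "N \<otimes>\<^bsub>A\<^esub> g = (\<lambda>x. if x \<in> carrier G then finsum R (\<lambda>y. g (inv\<^bsub>G\<^esub> y \<otimes>\<^bsub>G\<^esub> x)) H else \<zero>\<^bsub>R\<^esub>)"
proof (rule ext)
  fix x
  have gv: "\<And>y. g y \<in> carrier R" using A_val[OF g] .
  show "(N \<otimes>\<^bsub>A\<^esub> g) x = (if x \<in> carrier G then finsum R (\<lambda>y. g (inv\<^bsub>G\<^esub> y \<otimes>\<^bsub>G\<^esub> x)) H else \<zero>\<^bsub>R\<^esub>)"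
    unfolding A_mult N_supp using gv by (auto intro!: R.finsum_cong' simp: N_def)
qed

lemma fs_single:
  assumes "a \<in> carrier R"
  shows "finsum R (\<lambda>y. if c = y then a else \<zero>\<^bsub>R\<^esub>) H = (if c \<in> H then a else \<zero>\<^bsub>R\<^esub>)"
proof (cases "c \<in> H")
  case True
  then show ?thesis using R.finsum_singleton[OF True H_fin, of "\<lambda>_. a"] assms by simp
next
  case False
  then have "finsum R (\<lambda>y. if c = y then a else \<zero>\<^bsub>R\<^esub>) H = finsum R (\<lambda>y. \<zero>\<^bsub>R\<^esub>) H"
    by (intro R.finsum_cong') auto
  then show ?thesis using False by (simp add: R.finsum_zero)
qed

lemma invh_H_iff: "x \<in> carrier G \<Longrightarrow> (inv\<^bsub>G\<^esub> h \<otimes>\<^bsub>G\<^esub> x \<in> H) = (x \<in> H)"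
proof
  assume x: "x \<in> carrier G" and "inv\<^bsub>G\<^esub> h \<otimes>\<^bsub>G\<^esub> x \<in> H"
  then have "h \<otimes>\<^bsub>G\<^esub> (inv\<^bsub>G\<^esub> h \<otimes>\<^bsub>G\<^esub> x) \<in> H" using H_mult h_H by blast
  then show "x \<in> H" using x h_in by (simp add: G.m_assoc[symmetric])
next
  assume "x \<in> H" then show "inv\<^bsub>G\<^esub> h \<otimes>\<^bsub>G\<^esub> x \<in> H" using H_mult invh_H by blast
qed

lemma uN: "u \<otimes>\<^bsub>A\<^esub> N = \<zero>\<^bsub>A\<^esub>"
proof -
  have "\<And>x. x \<in> carrier G \<Longrightarrow> N (inv\<^bsub>G\<^esub> h \<otimes>\<^bsub>G\<^esub> x) \<ominus>\<^bsub>R\<^esub> N x = \<zero>\<^bsub>R\<^esub>"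
    using invh_H_iff by (simp add: N_def R.r_neg R.minus_eq)
  then show ?thesis by (auto simp: u_mult[OF N_A] A_zero)
qed

lemma Nu: "N \<otimes>\<^bsub>A\<^esub> u = \<zero>\<^bsub>A\<^esub>"
proof -
  have "finsum R (\<lambda>y. u (inv\<^bsub>G\<^esub> y \<otimes>\<^bsub>G\<^esub> x)) H = \<zero>\<^bsub>R\<^esub>" if x: "x \<in> carrier G" for x
  proof -
    have xh: "x \<otimes>\<^bsub>G\<^esub> inv\<^bsub>G\<^esub> h \<in> carrier G" using x h_in by simp
    have e: "u (inv\<^bsub>G\<^esub> y \<otimes>\<^bsub>G\<^esub> x) = (if x \<otimes>\<^bsub>G\<^esub> inv\<^bsub>G\<^esub> h = y then \<one>\<^bsub>R\<^esub> else \<zero>\<^bsub>R\<^esub>)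
               \<oplus>\<^bsub>R\<^esub> (if x = y then \<ominus>\<^bsub>R\<^esub> \<one>\<^bsub>R\<^esub> else \<zero>\<^bsub>R\<^esub>)" if y: "y \<in> H" for y
    proof -
      have yG: "y \<in> carrier G" using H_G y by blast
      have e1: "(inv\<^bsub>G\<^esub> y \<otimes>\<^bsub>G\<^esub> x = h) = (x \<otimes>\<^bsub>G\<^esub> inv\<^bsub>G\<^esub> h = y)"
        using G.inv_solve_left'[OF h_in yG x] G.inv_solve_right'[OF yG x h_in] by auto
      have e2: "(inv\<^bsub>G\<^esub> y \<otimes>\<^bsub>G\<^esub> x = \<one>\<^bsub>G\<^esub>) = (x = y)"
        using G.inv_solve_left'[OF G.one_closed yG x] yG by auto
      show ?thesis
        using h_ne e1 e2 by (auto simp: u_def)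
    qed
    have "finsum R (\<lambda>y. u (inv\<^bsub>G\<^esub> y \<otimes>\<^bsub>G\<^esub> x)) H
        = finsum R (\<lambda>y. (if x \<otimes>\<^bsub>G\<^esub> inv\<^bsub>G\<^esub> h = y then \<one>\<^bsub>R\<^esub> else \<zero>\<^bsub>R\<^esub>)
               \<oplus>\<^bsub>R\<^esub> (if x = y then \<ominus>\<^bsub>R\<^esub> \<one>\<^bsub>R\<^esub> else \<zero>\<^bsub>R\<^esub>)) H"
      using e by (intro R.finsum_cong') auto
    also have "\<dots> = finsum R (\<lambda>y. if x \<otimes>\<^bsub>G\<^esub> inv\<^bsub>G\<^esub> h = y then \<one>\<^bsub>R\<^esub> else \<zero>\<^bsub>R\<^esub>) H
        \<oplus>\<^bsub>R\<^esub> finsum R (\<lambda>y. if x = y then \<ominus>\<^bsub>R\<^esub> \<one>\<^bsub>R\<^esub> else \<zero>\<^bsub>R\<^esub>) H"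
      by (intro R.finsum_addf) auto
    also have "\<dots> = (if x \<otimes>\<^bsub>G\<^esub> inv\<^bsub>G\<^esub> h \<in> H then \<one>\<^bsub>R\<^esub> else \<zero>\<^bsub>R\<^esub>) \<oplus>\<^bsub>R\<^esub> (if x \<in> H then \<ominus>\<^bsub>R\<^esub> \<one>\<^bsub>R\<^esub> else \<zero>\<^bsub>R\<^esub>)"
      by (simp add: fs_single)
    also have "(x \<otimes>\<^bsub>G\<^esub> inv\<^bsub>G\<^esub> h \<in> H) = (x \<in> H)"
    proof
      assume "x \<otimes>\<^bsub>G\<^esub> inv\<^bsub>G\<^esub> h \<in> H"
      then have "(x \<otimes>\<^bsub>G\<^esub> inv\<^bsub>G\<^esub> h) \<otimes>\<^bsub>G\<^esub> h \<in> H" using H_mult h_H by blast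
      then show "x \<in> H" using x h_in by (simp add: G.m_assoc)
    next
      assume "x \<in> H" then show "x \<otimes>\<^bsub>G\<^esub> inv\<^bsub>G\<^esub> h \<in> H" using H_mult invh_H by blast
    qed
    finally show ?thesis by (simp add: R.r_neg)
  qed
  then show ?thesis by (auto simp: N_mult[OF u_A] A_zero)
qed

end


context tor begin

lemma exactI:
  assumes a: "a \<in> carrier A" and ua: "u \<otimes>\<^bsub>A\<^esub> a = \<zero>\<^bsub>A\<^esub>"
  shows "\<exists>b \<in> carrier A. a = N \<otimes>\<^bsub>A\<^esub> b"
proof -
  have av: "\<And>y. a y \<in> carrier R" using A_val[OF a] .
  have inv1: "a (inv\<^bsub>G\<^esub> h \<otimes>\<^bsub>G\<^esub> x) = a x" if x: "x \<in> carrier G" for x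
  proof -
    have "(u \<otimes>\<^bsub>A\<^esub> a) x = \<zero>\<^bsub>R\<^esub>" using ua by (simp add: A_zero)
    then have "a (inv\<^bsub>G\<^esub> h \<otimes>\<^bsub>G\<^esub> x) \<ominus>\<^bsub>R\<^esub> a x = \<zero>\<^bsub>R\<^esub>" using x by (simp add: u_mult[OF a])
    then show ?thesis using minus_zero_eq av by blast
  qed
  have inv2: "a (h \<otimes>\<^bsub>G\<^esub> x) = a x" if x: "x \<in> carrier G" for x
    using inv1[of "h \<otimes>\<^bsub>G\<^esub> x"] x h_in by (simp add: G.m_assoc[symmetric])
  have apow: "\<And>x. x \<in> carrier G \<Longrightarrow> a (h [^]\<^bsub>G\<^esub> j \<otimes>\<^bsub>G\<^esub> x) = a x" for j :: nat
  proof (induction j)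
    case 0 then show ?case by simp
  next
    case (Suc j)
    have "h [^]\<^bsub>G\<^esub> Suc j \<otimes>\<^bsub>G\<^esub> x = h [^]\<^bsub>G\<^esub> j \<otimes>\<^bsub>G\<^esub> (h \<otimes>\<^bsub>G\<^esub> x)"
      using Suc.prems h_in by (simp add: G.m_assoc)
    then show ?case using Suc.IH[of "h \<otimes>\<^bsub>G\<^esub> x"] Suc.prems h_in inv2 by simp
  qed
  have arep: "a x = a (rep x)" if x: "x \<in> carrier G" for x
    using apow[OF rep_G[OF x], of "ex x"] ex_prop(2)[OF x] by simp
  define b where "b = (\<lambda>x. if x \<in> carrier G \<and> rep x = x then a x else \<zero>\<^bsub>R\<^esub>)"
  have bA: "b \<in> carrier A"
  proof -
    have "{x. b x \<noteq> \<zero>\<^bsub>R\<^esub>} \<subseteq> {x. a x \<noteq> \<zero>\<^bsub>R\<^esub>}" by (auto simp: b_def)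
    then show ?thesis unfolding A_carrier using av A_fin[OF a] by (auto simp: b_def intro: finite_subset)
  qed
  have "a = N \<otimes>\<^bsub>A\<^esub> b"
  proof (rule ext)
    fix x
    show "a x = (N \<otimes>\<^bsub>A\<^esub> b) x"
    proof (cases "x \<in> carrier G")
      case False then show ?thesis using A_out[OF a] by (simp add: N_mult[OF bA])
    next
      case x: True
      have rG: "rep x \<in> carrier G" using rep_G[OF x] .
      have e: "b (inv\<^bsub>G\<^esub> y \<otimes>\<^bsub>G\<^esub> x) = (if x \<otimes>\<^bsub>G\<^esub> inv\<^bsub>G\<^esub> (rep x) = y then a x else \<zero>\<^bsub>R\<^esub>)"
        if y: "y \<in> H" for y
      proof -
        have yG: "y \<in> carrier G" using H_G y by blast
        have iyx: "inv\<^bsub>G\<^esub> y \<otimes>\<^bsub>G\<^esub> x \<in> carrier G" using yG x by simp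
        have r: "rep (inv\<^bsub>G\<^esub> y \<otimes>\<^bsub>G\<^esub> x) = rep x"
          using rep_eq[OF x orb_memI[OF H_inv[OF y]]] .
        have c: "(inv\<^bsub>G\<^esub> y \<otimes>\<^bsub>G\<^esub> x = rep x) = (x \<otimes>\<^bsub>G\<^esub> inv\<^bsub>G\<^esub> (rep x) = y)"
          using G.inv_solve_left'[OF rG yG x] G.inv_solve_right'[OF yG x rG] by auto
        show ?thesis
          unfolding b_def using r c iyx arep[OF x] by auto
      qed
      have mem: "x \<otimes>\<^bsub>G\<^esub> inv\<^bsub>G\<^esub> (rep x) \<in> H"
      proof -
        obtain z where z: "z \<in> H" "rep x = z \<otimes>\<^bsub>G\<^esub> x" using rep_orb[OF x] unfolding orb_def by blast
        have zG: "z \<in> carrier G" using H_G z by blast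
        have "x \<otimes>\<^bsub>G\<^esub> inv\<^bsub>G\<^esub> (rep x) = inv\<^bsub>G\<^esub> z"
          using z zG x by (simp add: G.inv_mult_group G.m_assoc[symmetric])
        then show ?thesis using H_inv z by simp
      qed
      have "(N \<otimes>\<^bsub>A\<^esub> b) x = finsum R (\<lambda>y. b (inv\<^bsub>G\<^esub> y \<otimes>\<^bsub>G\<^esub> x)) H"
        using x by (simp add: N_mult[OF bA])
      also have "\<dots> = finsum R (\<lambda>y. if x \<otimes>\<^bsub>G\<^esub> inv\<^bsub>G\<^esub> (rep x) = y then a x else \<zero>\<^bsub>R\<^esub>) H"
        using e av by (intro R.finsum_cong') auto
      also have "\<dots> = a x" using fs_single[OF av] mem by simp
      finally show ?thesis by simp
    qed
  qed
  then show ?thesis using bA by blast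
qed

lemma fs_nz:
  assumes "finsum R f S \<noteq> \<zero>\<^bsub>R\<^esub>"
  shows "\<exists>i\<in>S. f i \<noteq> \<zero>\<^bsub>R\<^esub>"
proof (rule ccontr)
  assume "\<not> ?thesis"
  then have "finsum R f S = finsum R (\<lambda>_. \<zero>\<^bsub>R\<^esub>) S" by (intro R.finsum_cong') auto
  then show False using assms by (simp add: R.finsum_zero)
qed

lemma exactII:
  assumes a: "a \<in> carrier A" and Na: "N \<otimes>\<^bsub>A\<^esub> a = \<zero>\<^bsub>A\<^esub>"
  shows "\<exists>b \<in> carrier A. a = u \<otimes>\<^bsub>A\<^esub> b"
proof -
  have av: "\<And>y. a y \<in> carrier R" using A_val[OF a] .
  have hyp: "finsum R (\<lambda>y. a (inv\<^bsub>G\<^esub> y \<otimes>\<^bsub>G\<^esub> x)) H = \<zero>\<^bsub>R\<^esub>" if x: "x \<in> carrier G" for x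
  proof -
    have "(N \<otimes>\<^bsub>A\<^esub> a) x = \<zero>\<^bsub>R\<^esub>" using Na by (simp add: A_zero)
    then show ?thesis using x by (simp add: N_mult[OF a])
  qed
  have orbsum: "finsum R (\<lambda>i. a (h [^]\<^bsub>G\<^esub> i \<otimes>\<^bsub>G\<^esub> t)) {..<p} = \<zero>\<^bsub>R\<^esub>" if t: "t \<in> carrier G" for t
  proof -
    have invH: "(\<lambda>y. inv\<^bsub>G\<^esub> y) ` H = H"
    proof
      show "(\<lambda>y. inv\<^bsub>G\<^esub> y) ` H \<subseteq> H" using H_inv by blast
      show "H \<subseteq> (\<lambda>y. inv\<^bsub>G\<^esub> y) ` H"
      proof
        fix y assume y: "y \<in> H"
        then have "y = inv\<^bsub>G\<^esub> (inv\<^bsub>G\<^esub> y)" using H_G by simp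
        then show "y \<in> (\<lambda>y. inv\<^bsub>G\<^esub> y) ` H" using H_inv y by blast
      qed
    qed
    have injinv: "inj_on (\<lambda>y. inv\<^bsub>G\<^esub> y) H" using G.inv_inj H_sub inj_on_subset by blast
    have "finsum R (\<lambda>i. a (h [^]\<^bsub>G\<^esub> i \<otimes>\<^bsub>G\<^esub> t)) {..<p} = finsum R (\<lambda>y. a (y \<otimes>\<^bsub>G\<^esub> t)) H"
      unfolding H_def using hinj av by (subst R.finsum_reindex) auto
    also have "\<dots> = finsum R (\<lambda>y. a (y \<otimes>\<^bsub>G\<^esub> t)) ((\<lambda>y. inv\<^bsub>G\<^esub> y) ` H)" using invH by simp
    also have "\<dots> = finsum R (\<lambda>y. a (inv\<^bsub>G\<^esub> y \<otimes>\<^bsub>G\<^esub> t)) H"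
      using injinv av by (subst R.finsum_reindex) auto
    also have "\<dots> = \<zero>\<^bsub>R\<^esub>" using hyp[OF t] .
    finally show ?thesis .
  qed
  define S where "S = (\<lambda>t (j::nat). finsum R (\<lambda>i. a (h [^]\<^bsub>G\<^esub> i \<otimes>\<^bsub>G\<^esub> t)) {1..j})"
  have Sc: "S t j \<in> carrier R" for t j unfolding S_def using av by (intro R.finsum_closed) auto
  define b where "b = (\<lambda>x. if x \<in> carrier G then \<ominus>\<^bsub>R\<^esub> S (rep x) (ex x) else \<zero>\<^bsub>R\<^esub>)"
  have bA: "b \<in> carrier A"
  proof -
    have sub: "{x. b x \<noteq> \<zero>\<^bsub>R\<^esub>} \<subseteq> (\<Union>z \<in> {x. a x \<noteq> \<zero>\<^bsub>R\<^esub>}. orb z)"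
    proof
      fix x assume "x \<in> {x. b x \<noteq> \<zero>\<^bsub>R\<^esub>}"
      then have x: "x \<in> carrier G" and nz: "\<ominus>\<^bsub>R\<^esub> S (rep x) (ex x) \<noteq> \<zero>\<^bsub>R\<^esub>" by (auto simp: b_def split: if_splits)
      have "S (rep x) (ex x) \<noteq> \<zero>\<^bsub>R\<^esub>" using nz by auto
      then obtain i :: nat where i: "a (h [^]\<^bsub>G\<^esub> i \<otimes>\<^bsub>G\<^esub> rep x) \<noteq> \<zero>\<^bsub>R\<^esub>"
        unfolding S_def using fs_nz by blast
      define z where "z = h [^]\<^bsub>G\<^esub> i \<otimes>\<^bsub>G\<^esub> rep x"
      have "z \<in> orb (rep x)" unfolding z_def using orb_memI pow_H by blast
      then have "orb z = orb x" using orb_eq[OF rep_G[OF x]] orb_rep[OF x] by simp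
      then have "x \<in> orb z" using self_orb[OF x] by simp
      then show "x \<in> (\<Union>z \<in> {x. a x \<noteq> \<zero>\<^bsub>R\<^esub>}. orb z)" using i z_def by blast
    qed
    have "finite (\<Union>z \<in> {x. a x \<noteq> \<zero>\<^bsub>R\<^esub>}. orb z)"
      using A_fin[OF a] H_fin by (auto simp: orb_def)
    then have "finite {x. b x \<noteq> \<zero>\<^bsub>R\<^esub>}" using sub finite_subset by blast
    then show ?thesis unfolding A_carrier using Sc by (auto simp: b_def)
  qed
  have "a = u \<otimes>\<^bsub>A\<^esub> b"
  proof (rule ext)
    fix x
    show "a x = (u \<otimes>\<^bsub>A\<^esub> b) x"
    proof (cases "x \<in> carrier G")
      case False then show ?thesis using A_out[OF a] by (simp add: u_mult[OF bA])
    next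
      case x: True
      define t where "t = rep x"
      have tG: "t \<in> carrier G" using rep_G[OF x] t_def by simp
      have ix: "inv\<^bsub>G\<^esub> h \<otimes>\<^bsub>G\<^esub> x \<in> carrier G" using invh_x_G[OF x] .
      have r: "rep (inv\<^bsub>G\<^esub> h \<otimes>\<^bsub>G\<^esub> x) = t" using rep_invh[OF x] t_def by simp
      have val: "(u \<otimes>\<^bsub>A\<^esub> b) x = \<ominus>\<^bsub>R\<^esub> S t (ex (inv\<^bsub>G\<^esub> h \<otimes>\<^bsub>G\<^esub> x)) \<ominus>\<^bsub>R\<^esub> \<ominus>\<^bsub>R\<^esub> S t (ex x)"
        using x ix r unfolding u_mult[OF bA] by (simp add: b_def t_def)
      show ?thesis
      proof (cases "ex x")
        case 0
        have xt: "x = t" using ex_prop(2)[OF x] 0 tG t_def by simp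
        have S0: "S t 0 = \<zero>\<^bsub>R\<^esub>" by (simp add: S_def)
        have "{..<p} = insert 0 {1..p - 1}" using p2 by auto
        then have "a (h [^]\<^bsub>G\<^esub> (0::nat) \<otimes>\<^bsub>G\<^esub> t) \<oplus>\<^bsub>R\<^esub> S t (p - 1) = \<zero>\<^bsub>R\<^esub>"
          using orbsum[OF tG] av unfolding S_def by (simp add: R.finsum_insert)
        then have "a x \<oplus>\<^bsub>R\<^esub> S t (p - 1) = \<zero>\<^bsub>R\<^esub>" using tG xt by simp
        then have "\<ominus>\<^bsub>R\<^esub> S t (p - 1) = a x" using R.minus_equality av Sc by blast
        then show ?thesis using val 0 ex_invh[OF x] S0 Sc av[of x] by (simp add: R.minus_eq)
      next
        case (Suc k)
        have xk: "x = h [^]\<^bsub>G\<^esub> (Suc k) \<otimes>\<^bsub>G\<^esub> t" using ex_prop(2)[OF x] Suc t_def by simp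
        have "{1..Suc k} = insert (Suc k) {1..k}" by auto
        then have SS: "S t (Suc k) = a x \<oplus>\<^bsub>R\<^esub> S t k"
          using av xk unfolding S_def by (simp add: R.finsum_insert)
        have "(u \<otimes>\<^bsub>A\<^esub> b) x = \<ominus>\<^bsub>R\<^esub> S t k \<oplus>\<^bsub>R\<^esub> (a x \<oplus>\<^bsub>R\<^esub> S t k)"
          using val Suc ex_invh[OF x] SS Sc av by (simp add: R.minus_eq)
        also have "\<dots> = a x" using Sc av
          by (simp add: R.a_assoc[symmetric] R.a_comm[of "\<ominus>\<^bsub>R\<^esub> S t k" "a x"])
             (simp add: R.a_assoc R.l_neg)
        finally show ?thesis by simp
      qed
    qed
  qed
  then show ?thesis using bA by blast
qed

end


context tor begin

lemma eps_sub:
  assumes fv: "\<And>x. f x \<in> carrier R" and T: "finite T" "supp f \<subseteq> T" "T \<subseteq> carrier G"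
  shows "eps f = finsum R f T"
  unfolding eps_def
  by (rule R.add.finprod_mono_neutral_cong_left) (use assms in \<open>auto simp: supp_def\<close>)

lemma eps_closed: "f \<in> carrier A \<Longrightarrow> eps f \<in> carrier R"
  unfolding eps_def using A_val by (intro R.finsum_closed) auto

lemma supp_G: "supp f \<subseteq> carrier G" by (auto simp: supp_def)

lemma eps_add:
  assumes f: "f \<in> carrier A" and g: "g \<in> carrier A"
  shows "eps (f \<oplus>\<^bsub>A\<^esub> g) = eps f \<oplus>\<^bsub>R\<^esub> eps g"
proof -
  define T where "T = supp f \<union> supp g"
  have fin: "finite T" using supp_fin f g by (simp add: T_def)
  have TG: "T \<subseteq> carrier G" using supp_G by (simp add: T_def)
  have fv: "\<And>x. f x \<in> carrier R" and gv: "\<And>x. g x \<in> carrier R" using A_val f g by auto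
  have sv: "\<And>x. (f \<oplus>\<^bsub>A\<^esub> g) x \<in> carrier R" using fv gv by (simp add: A_add)
  have ss: "supp (f \<oplus>\<^bsub>A\<^esub> g) \<subseteq> T"
    unfolding T_def supp_def using fv gv by (auto simp: A_add)
  have "eps (f \<oplus>\<^bsub>A\<^esub> g) = finsum R (f \<oplus>\<^bsub>A\<^esub> g) T" using eps_sub[OF sv fin ss TG] .
  also have "\<dots> = finsum R (\<lambda>x. f x \<oplus>\<^bsub>R\<^esub> g x) T"
    using TG fv gv by (intro R.finsum_cong') (auto simp: A_add)
  also have "\<dots> = finsum R f T \<oplus>\<^bsub>R\<^esub> finsum R g T"
    using fv gv by (intro R.finsum_addf) auto
  also have "\<dots> = eps f \<oplus>\<^bsub>R\<^esub> eps g"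
    using eps_sub[OF fv fin _ TG] eps_sub[OF gv fin _ TG] by (simp add: T_def)
  finally show ?thesis .
qed

lemma eps_mult:
  assumes f: "f \<in> carrier A" and g: "g \<in> carrier A"
  shows "eps (f \<otimes>\<^bsub>A\<^esub> g) = eps f \<otimes>\<^bsub>R\<^esub> eps g"
proof -
  have fv: "\<And>x. f x \<in> carrier R" and gv: "\<And>x. g x \<in> carrier R" using A_val f g by auto
  define T where "T = (\<lambda>(y, z). y \<otimes>\<^bsub>G\<^esub> z) ` (supp f \<times> supp g)"
  have fin: "finite T" unfolding T_def using supp_fin f g by simp
  have TG: "T \<subseteq> carrier G" unfolding T_def using supp_G by auto
  have sf: "{y \<in> carrier G. f y \<noteq> \<zero>\<^bsub>R\<^esub>} = supp f" by (simp add: supp_def)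
  have fg: "(f \<otimes>\<^bsub>A\<^esub> g) = (\<lambda>x. if x \<in> carrier G
                 then finsum R (\<lambda>y. f y \<otimes>\<^bsub>R\<^esub> g (inv\<^bsub>G\<^esub> y \<otimes>\<^bsub>G\<^esub> x)) (supp f) else \<zero>\<^bsub>R\<^esub>)"
    unfolding A_mult sf ..
  have sv: "\<And>x. (f \<otimes>\<^bsub>A\<^esub> g) x \<in> carrier R"
    unfolding fg using fv gv by (auto intro!: R.finsum_closed)
  have ss: "supp (f \<otimes>\<^bsub>A\<^esub> g) \<subseteq> T"
  proof
    fix x assume "x \<in> supp (f \<otimes>\<^bsub>A\<^esub> g)"
    then have x: "x \<in> carrier G" and nz: "finsum R (\<lambda>y. f y \<otimes>\<^bsub>R\<^esub> g (inv\<^bsub>G\<^esub> y \<otimes>\<^bsub>G\<^esub> x)) (supp f) \<noteq> \<zero>\<^bsub>R\<^esub>"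
      unfolding supp_def fg by auto
    obtain y where y: "y \<in> supp f" "f y \<otimes>\<^bsub>R\<^esub> g (inv\<^bsub>G\<^esub> y \<otimes>\<^bsub>G\<^esub> x) \<noteq> \<zero>\<^bsub>R\<^esub>" using fs_nz[OF nz] by blast
    have yG: "y \<in> carrier G" using y supp_G by blast
    have "g (inv\<^bsub>G\<^esub> y \<otimes>\<^bsub>G\<^esub> x) \<noteq> \<zero>\<^bsub>R\<^esub>" using y(2) fv by auto
    then have z: "inv\<^bsub>G\<^esub> y \<otimes>\<^bsub>G\<^esub> x \<in> supp g" using yG x by (simp add: supp_def)
    have "x = y \<otimes>\<^bsub>G\<^esub> (inv\<^bsub>G\<^esub> y \<otimes>\<^bsub>G\<^esub> x)" using yG x by (simp add: G.m_assoc[symmetric])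
    then show "x \<in> T" unfolding T_def using y(1) z by force
  qed
  have inner: "finsum R (\<lambda>x. g (inv\<^bsub>G\<^esub> y \<otimes>\<^bsub>G\<^esub> x)) T = eps g" if y: "y \<in> supp f" for y
  proof -
    have yG: "y \<in> carrier G" using y supp_G by blast
    define T' where "T' = (\<lambda>x. inv\<^bsub>G\<^esub> y \<otimes>\<^bsub>G\<^esub> x) ` T"
    have inj: "inj_on (\<lambda>x. inv\<^bsub>G\<^esub> y \<otimes>\<^bsub>G\<^esub> x) T"
      unfolding inj_on_def
    proof (intro ballI impI)
      fix a b assume a: "a \<in> T" and b: "b \<in> T" and e: "inv\<^bsub>G\<^esub> y \<otimes>\<^bsub>G\<^esub> a = inv\<^bsub>G\<^esub> y \<otimes>\<^bsub>G\<^esub> b"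
      have "y \<otimes>\<^bsub>G\<^esub> (inv\<^bsub>G\<^esub> y \<otimes>\<^bsub>G\<^esub> a) = y \<otimes>\<^bsub>G\<^esub> (inv\<^bsub>G\<^esub> y \<otimes>\<^bsub>G\<^esub> b)" using e by simp
      then show "a = b" using a b TG yG by (simp add: G.m_assoc[symmetric] subset_iff)
    qed
    have fin': "finite T'" using fin by (simp add: T'_def)
    have TG': "T' \<subseteq> carrier G" using TG yG by (auto simp: T'_def)
    have ss': "supp g \<subseteq> T'"
    proof
      fix z assume z: "z \<in> supp g"
      have zG: "z \<in> carrier G" using z supp_G by blast
      have "y \<otimes>\<^bsub>G\<^esub> z \<in> T" unfolding T_def using y z by force
      moreover have "z = inv\<^bsub>G\<^esub> y \<otimes>\<^bsub>G\<^esub> (y \<otimes>\<^bsub>G\<^esub> z)" using yG zG by (simp add: G.m_assoc[symmetric])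
      ultimately show "z \<in> T'" unfolding T'_def by blast
    qed
    have "eps g = finsum R g T'" using eps_sub[OF gv fin' ss' TG'] .
    also have "\<dots> = finsum R (\<lambda>x. g (inv\<^bsub>G\<^esub> y \<otimes>\<^bsub>G\<^esub> x)) T"
      unfolding T'_def using inj gv by (subst R.finsum_reindex) auto
    finally show ?thesis by simp
  qed
  have "eps (f \<otimes>\<^bsub>A\<^esub> g) = finsum R (f \<otimes>\<^bsub>A\<^esub> g) T" using eps_sub[OF sv fin ss TG] .
  also have "\<dots> = finsum R (\<lambda>x. finsum R (\<lambda>y. f y \<otimes>\<^bsub>R\<^esub> g (inv\<^bsub>G\<^esub> y \<otimes>\<^bsub>G\<^esub> x)) (supp f)) T"
    using TG fv gv by (intro R.finsum_cong') (auto simp: fg intro!: R.finsum_closed)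
  also have "\<dots> = finsum R (\<lambda>y. finsum R (\<lambda>x. f y \<otimes>\<^bsub>R\<^esub> g (inv\<^bsub>G\<^esub> y \<otimes>\<^bsub>G\<^esub> x)) T) (supp f)"
    using fin supp_fin[OF f] fv gv by (intro fs_swap) auto
  also have "\<dots> = finsum R (\<lambda>y. f y \<otimes>\<^bsub>R\<^esub> eps g) (supp f)"
  proof (intro R.finsum_cong')
    fix y assume y: "y \<in> supp f"
    have "finsum R (\<lambda>x. f y \<otimes>\<^bsub>R\<^esub> g (inv\<^bsub>G\<^esub> y \<otimes>\<^bsub>G\<^esub> x)) T = f y \<otimes>\<^bsub>R\<^esub> finsum R (\<lambda>x. g (inv\<^bsub>G\<^esub> y \<otimes>\<^bsub>G\<^esub> x)) T"
      using fin fv gv by (intro R.finsum_rdistr[symmetric]) auto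
    then show "finsum R (\<lambda>x. f y \<otimes>\<^bsub>R\<^esub> g (inv\<^bsub>G\<^esub> y \<otimes>\<^bsub>G\<^esub> x)) T = f y \<otimes>\<^bsub>R\<^esub> eps g"
      using inner[OF y] by simp
  qed (use fv eps_closed[OF g] in auto)
  also have "\<dots> = eps f \<otimes>\<^bsub>R\<^esub> eps g"
    unfolding eps_def using supp_fin[OF f] fv gv eps_closed[OF g]
    by (intro R.finsum_ldistr[symmetric]) (auto simp: eps_def)
  finally show ?thesis .
qed

lemma one_A: "\<one>\<^bsub>A\<^esub> \<in> carrier A"
proof -
  have "{x. \<one>\<^bsub>A\<^esub> x \<noteq> \<zero>\<^bsub>R\<^esub>} \<subseteq> {\<one>\<^bsub>G\<^esub>}" by (auto simp: A_one)
  then show ?thesis unfolding A_carrier by (auto simp: A_one intro: finite_subset)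
qed

lemma eps_one: "eps \<one>\<^bsub>A\<^esub> = \<one>\<^bsub>R\<^esub>"
proof -
  have "supp \<one>\<^bsub>A\<^esub> = {\<one>\<^bsub>G\<^esub>}" using one_ne by (auto simp: supp_def A_one)
  then show ?thesis by (simp add: eps_def A_one)
qed

lemma eps_u: "eps u = \<zero>\<^bsub>R\<^esub>"
proof -
  have "supp u = {h, \<one>\<^bsub>G\<^esub>}" using u_supp by (simp add: supp_def)
  then have "eps u = u h \<oplus>\<^bsub>R\<^esub> u \<one>\<^bsub>G\<^esub>" using h_ne by (simp add: eps_def u_def R.finsum_insert)
  then show ?thesis using h_ne by (simp add: u_def R.r_neg)
qed

lemma eps_N: "eps N = \<zero>\<^bsub>R\<^esub>"
proof -
  have "supp N = H" using N_supp by (simp add: supp_def)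
  then have "eps N = finsum R (\<lambda>_. \<one>\<^bsub>R\<^esub>) H" unfolding eps_def by (intro R.finsum_cong') (auto simp: N_def)
  also have "\<dots> = add_pow R (card H) \<one>\<^bsub>R\<^esub>" by (rule R.add.finprod_const) simp
  also have "\<dots> = \<zero>\<^bsub>R\<^esub>" using char H_card by simp
  finally show ?thesis .
qed

end


context tor begin

definition half where
  "half X S s t = (\<forall>x\<in>S. s \<odot>\<^bsub>X\<^esub> x = \<zero>\<^bsub>X\<^esub> \<longrightarrow> (\<exists>y\<in>S. x = t \<odot>\<^bsub>X\<^esub> y))"

definition acyc where "acyc X S = (half X S u N \<and> half X S N u)"

lemma chase_half:
  assumes s: "s \<in> carrier A" and t: "t \<in> carrier A" and ts: "t \<otimes>\<^bsub>A\<^esub> s = \<zero>\<^bsub>A\<^esub>"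
    and X: "left_module A X" and Y: "left_module A Y" and f: "f \<in> lin_hom A X Y"
    and hk: "half X (lin_kernel X Y f) t s" and hX: "half X (carrier X) s t"
  shows "half Y (f ` carrier X) s t"
  unfolding half_def
proof (intro ballI impI)
  interpret X: abelian_group X using lmD[OF X] by simp
  interpret Y: abelian_group Y using lmD[OF Y] by simp
  fix l assume l: "l \<in> f ` carrier X" and sl: "s \<odot>\<^bsub>Y\<^esub> l = \<zero>\<^bsub>Y\<^esub>"
  then obtain x where x: "x \<in> carrier X" "l = f x" by blast
  have sx: "s \<odot>\<^bsub>X\<^esub> x \<in> carrier X" using lmD(3)[OF X s x(1)] .
  have "f (s \<odot>\<^bsub>X\<^esub> x) = \<zero>\<^bsub>Y\<^esub>" using lin_homD(3)[OF f s x(1)] sl x by simp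
  then have kx: "s \<odot>\<^bsub>X\<^esub> x \<in> lin_kernel X Y f" using sx by (simp add: lin_kernel_def)
  have "t \<odot>\<^bsub>X\<^esub> (s \<odot>\<^bsub>X\<^esub> x) = \<zero>\<^bsub>X\<^esub>"
    using lmD(6)[OF X t s x(1)] ts lm_zero_l[OF X x(1)] by simp
  then obtain k where k: "k \<in> lin_kernel X Y f" "s \<odot>\<^bsub>X\<^esub> x = s \<odot>\<^bsub>X\<^esub> k"
    using hk kx unfolding half_def by blast
  have kX: "k \<in> carrier X" and fk: "f k = \<zero>\<^bsub>Y\<^esub>" using k(1) by (auto simp: lin_kernel_def)
  have xk: "x \<ominus>\<^bsub>X\<^esub> k \<in> carrier X" using x(1) kX by simp
  have "s \<odot>\<^bsub>X\<^esub> (x \<ominus>\<^bsub>X\<^esub> k) = \<zero>\<^bsub>X\<^esub>"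
    using lm_minus[OF X s x(1) kX] k(2) lmD(3)[OF X s kX] by (simp add: X.r_neg X.minus_eq)
  then obtain y where y: "y \<in> carrier X" "x \<ominus>\<^bsub>X\<^esub> k = t \<odot>\<^bsub>X\<^esub> y"
    using hX xk unfolding half_def by blast
  have "f (x \<ominus>\<^bsub>X\<^esub> k) = f x"
    using lin_hom_minus[OF f X.abelian_group_axioms Y.abelian_group_axioms x(1) kX] fk lin_homD(1)[OF f x(1)]
    by (simp add: Y.minus_eq)
  then have "l = t \<odot>\<^bsub>Y\<^esub> f y" using y x lin_homD(3)[OF f t y(1)] by simp
  then show "\<exists>y\<in>f ` carrier X. l = t \<odot>\<^bsub>Y\<^esub> y" using y(1) by blast
qed

lemma chase:
  assumes X: "left_module A X" and Y: "left_module A Y" and f: "f \<in> lin_hom A X Y"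
    and hk: "acyc X (lin_kernel X Y f)" and hX: "acyc X (carrier X)"
  shows "acyc Y (f ` carrier X)"
  using chase_half[OF u_A N_A Nu X Y f] chase_half[OF N_A u_A uN X Y f] hk hX
  unfolding acyc_def by blast

lemma half_proj:
  assumes s: "s \<in> carrier A" and t: "t \<in> carrier A" and RA: "ring A"
    and ex: "\<And>a. a \<in> carrier A \<Longrightarrow> s \<otimes>\<^bsub>A\<^esub> a = \<zero>\<^bsub>A\<^esub> \<Longrightarrow> \<exists>b\<in>carrier A. a = t \<otimes>\<^bsub>A\<^esub> b"
    and P: "fg_projective A X"
  shows "half X (carrier X) s t"
  unfolding half_def
proof (intro ballI impI)
  interpret A: ring A by fact
  have X: "left_module A X" using P by (simp add: fg_projective_def)
  interpret X: abelian_group X using lmD[OF X] by simp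
  obtain n i q where i: "i \<in> lin_hom A X (free_mod A n)" and q: "q \<in> lin_hom A (free_mod A n) X"
    and qi: "\<forall>x\<in>carrier X. q (i x) = x" using P unfolding fg_projective_def by blast
  interpret F: abelian_group "free_mod A n" using free_mod_ag[OF RA] .
  fix x assume x: "x \<in> carrier X" and sx: "s \<odot>\<^bsub>X\<^esub> x = \<zero>\<^bsub>X\<^esub>"
  have ix: "i x \<in> carrier (free_mod A n)" using lin_homD(1)[OF i x] .
  have "s \<odot>\<^bsub>free_mod A n\<^esub> i x = \<zero>\<^bsub>free_mod A n\<^esub>"
    using lin_homD(3)[OF i s x] sx lin_hom_zero[OF i X.abelian_group_axioms F.abelian_group_axioms] by simp
  then have "(\<lambda>ia. if ia < n then s \<otimes>\<^bsub>A\<^esub> i x ia else \<zero>\<^bsub>A\<^esub>) = (\<lambda>_. \<zero>\<^bsub>A\<^esub>)"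
    by (simp add: free_mod_simps)
  then have sj: "s \<otimes>\<^bsub>A\<^esub> i x j = \<zero>\<^bsub>A\<^esub>" if "j < n" for j
    using fun_cong[of _ _ j] that by (metis (mono_tags, lifting))
  have ixj: "i x j \<in> carrier A" for j using free_val[OF RA ix] .
  define w where "w = (\<lambda>j. if j < n then (SOME b. b \<in> carrier A \<and> i x j = t \<otimes>\<^bsub>A\<^esub> b) else \<zero>\<^bsub>A\<^esub>)"
  have wj: "w j \<in> carrier A \<and> i x j = t \<otimes>\<^bsub>A\<^esub> w j" if "j < n" for j
  proof -
    have "\<exists>b. b \<in> carrier A \<and> i x j = t \<otimes>\<^bsub>A\<^esub> b" using ex[OF ixj sj[OF that]] by blast
    then have "(SOME b. b \<in> carrier A \<and> i x j = t \<otimes>\<^bsub>A\<^esub> b) \<in> carrier A \<and>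
        i x j = t \<otimes>\<^bsub>A\<^esub> (SOME b. b \<in> carrier A \<and> i x j = t \<otimes>\<^bsub>A\<^esub> b)" by (rule someI_ex)
    then show ?thesis unfolding w_def using that by simp
  qed
  have wF: "w \<in> carrier (free_mod A n)" using wj by (auto simp: free_mod_simps w_def)
  have "t \<odot>\<^bsub>free_mod A n\<^esub> w = i x"
  proof
    fix j show "(t \<odot>\<^bsub>free_mod A n\<^esub> w) j = i x j"
      using wj ix by (cases "j < n") (auto simp: free_mod_simps)
  qed
  then have "x = t \<odot>\<^bsub>X\<^esub> q w" using qi x lin_homD(3)[OF q t wF] by metis
  then show "\<exists>y\<in>carrier X. x = t \<odot>\<^bsub>X\<^esub> y" using lin_homD(1)[OF q wF] by blast
qed

lemma proj_acyc:
  assumes RA: "ring A" and P: "fg_projective A X"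
  shows "acyc X (carrier X)"
  unfolding acyc_def
  using half_proj[OF u_A N_A RA exactI P] half_proj[OF N_A u_A RA exactII P] by blast

lemma acyc_zero:
  assumes X: "left_module A X"
  shows "acyc X {\<zero>\<^bsub>X\<^esub>}"
  unfolding acyc_def half_def using lm_zero_r[OF X u_A] lm_zero_r[OF X N_A] by auto

lemma res_acyc:
  assumes RA: "ring A" and res: "has_fin_proj_res A M" and M: "left_module A M"
  shows "acyc M (carrier M)"
proof -
  obtain P :: "nat \<Rightarrow> ('g \<Rightarrow> 'r, nat \<Rightarrow> 'g \<Rightarrow> 'r) module" and d \<epsilon> k where
    Pp: "\<forall>i. fg_projective A (P i)" and Pz: "\<forall>i>k. carrier (P i) = {\<zero>\<^bsub>P i\<^esub>}"
    and dl: "\<forall>i. d i \<in> lin_hom A (P (Suc i)) (P i)"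
    and el: "\<epsilon> \<in> lin_hom A (P 0) M" and es: "\<epsilon> ` carrier (P 0) = carrier M"
    and e0: "lin_kernel (P 0) M \<epsilon> = d 0 ` carrier (P 1)"
    and ex: "\<forall>i. lin_kernel (P (Suc i)) (P i) (d i) = d (Suc i) ` carrier (P (Suc (Suc i)))"
    using res unfolding has_fin_proj_res_def by (elim exE conjE) (rule that)
  have Pl: "left_module A (P i)" for i using Pp by (simp add: fg_projective_def)
  have Pag: "abelian_group (P i)" for i using lmD(2)[OF Pl] .
  define K where "K = (\<lambda>i. d i ` carrier (P (Suc i)))"
  have base: "acyc (P i) (K i)" if "i \<ge> k" for i
  proof -
    have "carrier (P (Suc i)) = {\<zero>\<^bsub>P (Suc i)\<^esub>}" using Pz that by simp
    then have "K i = {\<zero>\<^bsub>P i\<^esub>}" using lin_hom_zero[OF dl[rule_format] Pag Pag] by (simp add: K_def)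
    then show ?thesis using acyc_zero[OF Pl] by simp
  qed
  have step: "acyc (P i) (K i)" if "acyc (P (Suc i)) (K (Suc i))" for i
  proof -
    have "lin_kernel (P (Suc i)) (P i) (d i) = K (Suc i)" using ex by (simp add: K_def)
    then have "acyc (P (Suc i)) (lin_kernel (P (Suc i)) (P i) (d i))" using that by simp
    then show ?thesis unfolding K_def
      by (rule chase[OF Pl Pl dl[rule_format] _ proj_acyc[OF RA Pp[rule_format]]])
  qed
  have down: "acyc (P (k - j)) (K (k - j))" for j
  proof (induction j)
    case 0 then show ?case using base by simp
  next
    case (Suc j)
    show ?case
    proof (cases "j < k")
      case True
      then have "k - j = Suc (k - Suc j)" by simp
      then show ?thesis using step Suc.IH by simp
    next
      case False then show ?thesis using Suc.IH by simp
    qed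
  qed
  have K0: "acyc (P 0) (K 0)" using down[of k] by simp
  have "lin_kernel (P 0) M \<epsilon> = K 0" using e0 by (simp add: K_def)
  then have "acyc M (\<epsilon> ` carrier (P 0))"
    using chase[OF Pl M el _ proj_acyc[OF RA Pp[rule_format]]] K0 by simp
  then show ?thesis using es by simp
qed

end


locale tor2 = tor +
  assumes RA': "ring (group_ring R G)"
begin

lemma RA: "ring A" using RA' by (simp add: A_def)

sublocale A: ring A by (rule RA)

definition I where "I = {a \<otimes>\<^bsub>A\<^esub> u | a. a \<in> carrier A}"
definition cls where "cls x = {(\<lambda>_::nat. y) | y. y \<in> carrier A \<and> y \<ominus>\<^bsub>A\<^esub> x \<in> I}"
definition rp where "rp S = (SOME x. x \<in> carrier A \<and> S = cls x)"
definition Mq where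
  "Mq = \<lparr>carrier = cls ` carrier A, monoid.mult = (\<lambda>S T. S), one = cls \<zero>\<^bsub>A\<^esub>,
         zero = cls \<zero>\<^bsub>A\<^esub>, add = (\<lambda>S T. cls (rp S \<oplus>\<^bsub>A\<^esub> rp T)),
         smult = (\<lambda>a S. cls (a \<otimes>\<^bsub>A\<^esub> rp S))\<rparr>"

lemma Mq_simps:
  "carrier Mq = cls ` carrier A" "\<zero>\<^bsub>Mq\<^esub> = cls \<zero>\<^bsub>A\<^esub>"
  "S \<oplus>\<^bsub>Mq\<^esub> T = cls (rp S \<oplus>\<^bsub>A\<^esub> rp T)" "a \<odot>\<^bsub>Mq\<^esub> S = cls (a \<otimes>\<^bsub>A\<^esub> rp S)"
  by (simp_all add: Mq_def)

lemma minus_zero_A [simp]: "x \<in> carrier A \<Longrightarrow> x \<ominus>\<^bsub>A\<^esub> \<zero>\<^bsub>A\<^esub> = x"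
  by (simp add: A.minus_eq)

lemma I_sub: "I \<subseteq> carrier A" unfolding I_def using u_A by auto
lemma I_A: "x \<in> I \<Longrightarrow> x \<in> carrier A" using I_sub by blast
lemma I_zero: "\<zero>\<^bsub>A\<^esub> \<in> I" unfolding I_def using u_A by (auto intro!: exI[of _ "\<zero>\<^bsub>A\<^esub>"])
lemma u_I: "u \<in> I" unfolding I_def using u_A by (auto intro!: exI[of _ "\<one>\<^bsub>A\<^esub>"])
lemma I_add: assumes "x \<in> I" "y \<in> I" shows "x \<oplus>\<^bsub>A\<^esub> y \<in> I"
proof -
  obtain a b where ab: "a \<in> carrier A" "x = a \<otimes>\<^bsub>A\<^esub> u" "b \<in> carrier A" "y = b \<otimes>\<^bsub>A\<^esub> u"
    using assms unfolding I_def by blast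
  then have "x \<oplus>\<^bsub>A\<^esub> y = (a \<oplus>\<^bsub>A\<^esub> b) \<otimes>\<^bsub>A\<^esub> u" using u_A by (simp add: A.l_distr)
  then show ?thesis unfolding I_def using ab by blast
qed
lemma I_neg: assumes "x \<in> I" shows "\<ominus>\<^bsub>A\<^esub> x \<in> I"
proof -
  obtain a where a: "a \<in> carrier A" "x = a \<otimes>\<^bsub>A\<^esub> u" using assms unfolding I_def by blast
  then have "\<ominus>\<^bsub>A\<^esub> x = (\<ominus>\<^bsub>A\<^esub> a) \<otimes>\<^bsub>A\<^esub> u" using u_A by (simp add: A.l_minus)
  then show ?thesis unfolding I_def using a by blast
qed
lemma I_minus: "x \<in> I \<Longrightarrow> y \<in> I \<Longrightarrow> x \<ominus>\<^bsub>A\<^esub> y \<in> I"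
  by (simp add: A.minus_eq I_add I_neg)
lemma I_lmult: assumes "r \<in> carrier A" "x \<in> I" shows "r \<otimes>\<^bsub>A\<^esub> x \<in> I"
proof -
  obtain a where a: "a \<in> carrier A" "x = a \<otimes>\<^bsub>A\<^esub> u" using assms unfolding I_def by blast
  then have "r \<otimes>\<^bsub>A\<^esub> x = (r \<otimes>\<^bsub>A\<^esub> a) \<otimes>\<^bsub>A\<^esub> u" using u_A assms by (simp add: A.m_assoc)
  then show ?thesis unfolding I_def using a assms by blast
qed

lemma diff_split: "a \<in> carrier A \<Longrightarrow> b \<in> carrier A \<Longrightarrow> c \<in> carrier A \<Longrightarrow>
   a \<ominus>\<^bsub>A\<^esub> c = (a \<ominus>\<^bsub>A\<^esub> b) \<oplus>\<^bsub>A\<^esub> (b \<ominus>\<^bsub>A\<^esub> c)"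
  by (simp add: A.minus_eq A.a_assoc A.a_assoc[symmetric, of "\<ominus>\<^bsub>A\<^esub> b" b] A.l_neg)

lemma cls_eq:
  assumes x: "x \<in> carrier A" and y: "y \<in> carrier A"
  shows "(cls x = cls y) = (x \<ominus>\<^bsub>A\<^esub> y \<in> I)"
proof
  assume e: "cls x = cls y"
  have "(\<lambda>_::nat. x) \<in> cls x" using x I_zero by (auto simp: cls_def A.r_neg A.minus_eq)
  then have "(\<lambda>_::nat. x) \<in> cls y" using e by simp
  then obtain y' where "(\<lambda>_::nat. x) = (\<lambda>_. y')" "y' \<ominus>\<^bsub>A\<^esub> y \<in> I" unfolding cls_def by blast
  then show "x \<ominus>\<^bsub>A\<^esub> y \<in> I" by (metis (no_types))
next
  assume d: "x \<ominus>\<^bsub>A\<^esub> y \<in> I"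
  have "z \<ominus>\<^bsub>A\<^esub> x \<in> I \<longleftrightarrow> z \<ominus>\<^bsub>A\<^esub> y \<in> I" if z: "z \<in> carrier A" for z
  proof
    assume "z \<ominus>\<^bsub>A\<^esub> x \<in> I"
    then show "z \<ominus>\<^bsub>A\<^esub> y \<in> I" using diff_split[OF z x y] I_add d by simp
  next
    assume zy: "z \<ominus>\<^bsub>A\<^esub> y \<in> I"
    have "z \<ominus>\<^bsub>A\<^esub> y = (z \<ominus>\<^bsub>A\<^esub> x) \<oplus>\<^bsub>A\<^esub> (x \<ominus>\<^bsub>A\<^esub> y)" using diff_split[OF z x y] .
    then have "z \<ominus>\<^bsub>A\<^esub> x = (z \<ominus>\<^bsub>A\<^esub> y) \<ominus>\<^bsub>A\<^esub> (x \<ominus>\<^bsub>A\<^esub> y)"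
      using z x y by (simp add: A.minus_eq A.a_assoc A.r_neg A.r_zero)
    then show "z \<ominus>\<^bsub>A\<^esub> x \<in> I" using I_minus zy d by simp
  qed
  then show "cls x = cls y" unfolding cls_def by blast
qed

lemma Mq_elim:
  assumes "S \<in> carrier Mq" obtains x where "x \<in> carrier A" "S = cls x"
  using assms by (auto simp: Mq_simps)

lemma rp_prop:
  assumes x: "x \<in> carrier A"
  shows "rp (cls x) \<in> carrier A" "rp (cls x) \<ominus>\<^bsub>A\<^esub> x \<in> I"
proof -
  have "rp (cls x) \<in> carrier A \<and> cls x = cls (rp (cls x))"
    unfolding rp_def by (rule someI[of _ x]) (simp add: x)
  then show "rp (cls x) \<in> carrier A" "rp (cls x) \<ominus>\<^bsub>A\<^esub> x \<in> I"
    using cls_eq x by auto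
qed

lemma add_cls:
  assumes x: "x \<in> carrier A" and y: "y \<in> carrier A"
  shows "cls x \<oplus>\<^bsub>Mq\<^esub> cls y = cls (x \<oplus>\<^bsub>A\<^esub> y)"
proof -
  define x' where "x' = rp (cls x)"
  define y' where "y' = rp (cls y)"
  have x': "x' \<in> carrier A" "x' \<ominus>\<^bsub>A\<^esub> x \<in> I" using rp_prop[OF x] x'_def by auto
  have y': "y' \<in> carrier A" "y' \<ominus>\<^bsub>A\<^esub> y \<in> I" using rp_prop[OF y] y'_def by auto
  have "(x' \<oplus>\<^bsub>A\<^esub> y') \<ominus>\<^bsub>A\<^esub> (x \<oplus>\<^bsub>A\<^esub> y) = (x' \<ominus>\<^bsub>A\<^esub> x) \<oplus>\<^bsub>A\<^esub> (y' \<ominus>\<^bsub>A\<^esub> y)"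
    using x y x' y' by (simp add: A.minus_eq A.minus_add A.a_ac)
  then have "(x' \<oplus>\<^bsub>A\<^esub> y') \<ominus>\<^bsub>A\<^esub> (x \<oplus>\<^bsub>A\<^esub> y) \<in> I" using I_add x' y' by simp
  then show ?thesis using cls_eq x y x' y' by (simp add: Mq_simps x'_def[symmetric] y'_def[symmetric])
qed

lemma smult_cls:
  assumes a: "a \<in> carrier A" and x: "x \<in> carrier A"
  shows "a \<odot>\<^bsub>Mq\<^esub> cls x = cls (a \<otimes>\<^bsub>A\<^esub> x)"
proof -
  define x' where "x' = rp (cls x)"
  have x': "x' \<in> carrier A" "x' \<ominus>\<^bsub>A\<^esub> x \<in> I" using rp_prop[OF x] x'_def by auto
  have "(a \<otimes>\<^bsub>A\<^esub> x') \<ominus>\<^bsub>A\<^esub> (a \<otimes>\<^bsub>A\<^esub> x) = a \<otimes>\<^bsub>A\<^esub> (x' \<ominus>\<^bsub>A\<^esub> x)"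
    using a x x' by (simp add: A.minus_eq A.r_distr A.r_minus)
  then have "(a \<otimes>\<^bsub>A\<^esub> x') \<ominus>\<^bsub>A\<^esub> (a \<otimes>\<^bsub>A\<^esub> x) \<in> I" using I_lmult a x' by simp
  then show ?thesis using cls_eq a x x' by (simp add: Mq_simps x'_def[symmetric])
qed

lemma cls_in: "x \<in> carrier A \<Longrightarrow> cls x \<in> carrier Mq" by (simp add: Mq_simps)

lemma Mq_ag: "abelian_group Mq"
proof (rule abelian_groupI)
  fix S T assume "S \<in> carrier Mq" "T \<in> carrier Mq"
  then show "S \<oplus>\<^bsub>Mq\<^esub> T \<in> carrier Mq"
    by (elim Mq_elim) (simp add: add_cls cls_in)
next
  show "\<zero>\<^bsub>Mq\<^esub> \<in> carrier Mq" by (simp add: Mq_simps)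
next
  fix S T U assume "S \<in> carrier Mq" "T \<in> carrier Mq" "U \<in> carrier Mq"
  then show "S \<oplus>\<^bsub>Mq\<^esub> T \<oplus>\<^bsub>Mq\<^esub> U = S \<oplus>\<^bsub>Mq\<^esub> (T \<oplus>\<^bsub>Mq\<^esub> U)"
    by (elim Mq_elim) (simp add: add_cls A.a_assoc)
next
  fix S T assume "S \<in> carrier Mq" "T \<in> carrier Mq"
  then show "S \<oplus>\<^bsub>Mq\<^esub> T = T \<oplus>\<^bsub>Mq\<^esub> S"
    by (elim Mq_elim) (simp add: add_cls A.a_comm)
next
  fix S assume "S \<in> carrier Mq"
  then show "\<zero>\<^bsub>Mq\<^esub> \<oplus>\<^bsub>Mq\<^esub> S = S"
    by (elim Mq_elim) (simp add: add_cls Mq_simps(2))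
next
  fix S assume "S \<in> carrier Mq"
  then obtain x where x: "x \<in> carrier A" "S = cls x" by (elim Mq_elim)
  have "cls (\<ominus>\<^bsub>A\<^esub> x) \<oplus>\<^bsub>Mq\<^esub> S = \<zero>\<^bsub>Mq\<^esub>" using x by (simp add: add_cls Mq_simps(2) A.l_neg)
  then show "\<exists>y\<in>carrier Mq. y \<oplus>\<^bsub>Mq\<^esub> S = \<zero>\<^bsub>Mq\<^esub>" using x cls_in by blast
qed

lemma Mq_lm: "left_module A Mq"
  unfolding left_module_def
proof (intro conjI ballI)
  show "ring A" by (rule RA)
  show "abelian_group Mq" by (rule Mq_ag)
next
  fix a S assume "a \<in> carrier A" "S \<in> carrier Mq"
  then show "a \<odot>\<^bsub>Mq\<^esub> S \<in> carrier Mq" by (elim Mq_elim) (simp add: smult_cls cls_in)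
next
  fix a b S assume "a \<in> carrier A" "b \<in> carrier A" "S \<in> carrier Mq"
  then show "(a \<oplus>\<^bsub>A\<^esub> b) \<odot>\<^bsub>Mq\<^esub> S = a \<odot>\<^bsub>Mq\<^esub> S \<oplus>\<^bsub>Mq\<^esub> b \<odot>\<^bsub>Mq\<^esub> S"
    by (elim Mq_elim) (simp add: smult_cls add_cls A.l_distr)
next
  fix a S T assume "a \<in> carrier A" "S \<in> carrier Mq" "T \<in> carrier Mq"
  then show "a \<odot>\<^bsub>Mq\<^esub> (S \<oplus>\<^bsub>Mq\<^esub> T) = a \<odot>\<^bsub>Mq\<^esub> S \<oplus>\<^bsub>Mq\<^esub> a \<odot>\<^bsub>Mq\<^esub> T"
    by (elim Mq_elim) (simp add: smult_cls add_cls A.r_distr)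
next
  fix a b S assume "a \<in> carrier A" "b \<in> carrier A" "S \<in> carrier Mq"
  then show "(a \<otimes>\<^bsub>A\<^esub> b) \<odot>\<^bsub>Mq\<^esub> S = a \<odot>\<^bsub>Mq\<^esub> (b \<odot>\<^bsub>Mq\<^esub> S)"
    by (elim Mq_elim) (simp add: smult_cls A.m_assoc)
next
  fix S assume "S \<in> carrier Mq"
  then show "\<one>\<^bsub>A\<^esub> \<odot>\<^bsub>Mq\<^esub> S = S"
    by (elim Mq_elim) (simp add: smult_cls)
qed

lemma Mq_fp: "fin_presented A Mq"
  unfolding fin_presented_def
proof (intro conjI exI)
  show "left_module A Mq" by (rule Mq_lm)
  define f where "f = (\<lambda>v::nat \<Rightarrow> _. cls (v 0))"
  define g where
    "g = (\<lambda>(v::nat \<Rightarrow> _) (i::nat). if i < 1 then v 0 \<otimes>\<^bsub>A\<^esub> u else \<zero>\<^bsub>A\<^esub>)"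
  have v0: "v 0 \<in> carrier A" if "v \<in> carrier (free_mod A 1)" for v
    using that by (simp add: free_mod_simps)
  show "f \<in> lin_hom A (free_mod A 1) Mq"
    unfolding lin_hom_def using v0 by (auto simp: f_def cls_in free_mod_simps add_cls smult_cls)
  show "f ` carrier (free_mod A 1) = carrier Mq"
  proof
    show "f ` carrier (free_mod A 1) \<subseteq> carrier Mq" using v0 by (auto simp: f_def cls_in)
    show "carrier Mq \<subseteq> f ` carrier (free_mod A 1)"
    proof
      fix S assume "S \<in> carrier Mq"
      then obtain x where x: "x \<in> carrier A" "S = cls x" by (elim Mq_elim)
      have "(\<lambda>i. if i < 1 then x else \<zero>\<^bsub>A\<^esub>) \<in> carrier (free_mod A 1)" using x by (auto simp: free_mod_simps)
      moreover have "f (\<lambda>i. if i < 1 then x else \<zero>\<^bsub>A\<^esub>) = S" using x by (simp add: f_def)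
      ultimately show "S \<in> f ` carrier (free_mod A 1)" by (metis image_eqI)
    qed
  qed
  show "g \<in> lin_hom A (free_mod A 1) (free_mod A 1)"
    unfolding lin_hom_def using v0 u_A
    by (auto simp: g_def free_mod_simps A.l_distr A.m_assoc)
  show "g ` carrier (free_mod A 1) = lin_kernel (free_mod A 1) Mq f"
  proof
    show "g ` carrier (free_mod A 1) \<subseteq> lin_kernel (free_mod A 1) Mq f"
    proof
      fix w assume "w \<in> g ` carrier (free_mod A 1)"
      then obtain v where v: "v \<in> carrier (free_mod A 1)" "w = g v" by blast
      have "v 0 \<otimes>\<^bsub>A\<^esub> u \<in> I" using v0[OF v(1)] unfolding I_def by blast
      then have "cls (v 0 \<otimes>\<^bsub>A\<^esub> u) = cls \<zero>\<^bsub>A\<^esub>" using cls_eq v0[OF v(1)] u_A by (simp add: A.minus_eq)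
      then show "w \<in> lin_kernel (free_mod A 1) Mq f"
        using v v0[OF v(1)] u_A by (simp add: lin_kernel_def f_def g_def free_mod_simps Mq_simps)
    qed
  next
    show "lin_kernel (free_mod A 1) Mq f \<subseteq> g ` carrier (free_mod A 1)"
    proof
      fix w assume "w \<in> lin_kernel (free_mod A 1) Mq f"
      then have w: "w \<in> carrier (free_mod A 1)" and c: "cls (w 0) = cls \<zero>\<^bsub>A\<^esub>"
        by (auto simp: lin_kernel_def f_def Mq_simps)
      have "w 0 \<in> I" using c cls_eq v0[OF w] by simp
      then obtain a where a: "a \<in> carrier A" "w 0 = a \<otimes>\<^bsub>A\<^esub> u" unfolding I_def by blast
      have "(\<lambda>i. if i < 1 then a else \<zero>\<^bsub>A\<^esub>) \<in> carrier (free_mod A 1)" using a by (auto simp: free_mod_simps)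
      moreover have "g (\<lambda>i. if i < 1 then a else \<zero>\<^bsub>A\<^esub>) = w"
      proof
        fix i show "g (\<lambda>i. if i < 1 then a else \<zero>\<^bsub>A\<^esub>) i = w i"
          using a w by (cases "i < 1") (auto simp: g_def free_mod_simps)
      qed
      ultimately show "w \<in> g ` carrier (free_mod A 1)" by (metis image_eqI)
    qed
  qed
qed

lemma Mq_nonacyc: "\<not> acyc Mq (carrier Mq)"
proof
  assume "acyc Mq (carrier Mq)"
  then have h: "half Mq (carrier Mq) u N" by (simp add: acyc_def)
  have c1: "cls \<one>\<^bsub>A\<^esub> \<in> carrier Mq" by (simp add: cls_in)
  have "u \<odot>\<^bsub>Mq\<^esub> cls \<one>\<^bsub>A\<^esub> = \<zero>\<^bsub>Mq\<^esub>"
    using smult_cls[OF u_A A.one_closed] cls_eq[OF u_A A.zero_closed] u_I u_A by (simp add: Mq_simps)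
  then obtain Y where Y: "Y \<in> carrier Mq" "cls \<one>\<^bsub>A\<^esub> = N \<odot>\<^bsub>Mq\<^esub> Y" using h c1 unfolding half_def by blast
  then obtain y where y: "y \<in> carrier A" "Y = cls y" by (elim Mq_elim)
  have Ny: "N \<otimes>\<^bsub>A\<^esub> y \<in> carrier A" using N_A y by simp
  have "cls \<one>\<^bsub>A\<^esub> = cls (N \<otimes>\<^bsub>A\<^esub> y)" using Y y smult_cls[OF N_A y(1)] by simp
  then have "\<one>\<^bsub>A\<^esub> \<ominus>\<^bsub>A\<^esub> N \<otimes>\<^bsub>A\<^esub> y \<in> I" using cls_eq[OF A.one_closed Ny] by simp
  then obtain a where a: "a \<in> carrier A" "\<one>\<^bsub>A\<^esub> \<ominus>\<^bsub>A\<^esub> N \<otimes>\<^bsub>A\<^esub> y = a \<otimes>\<^bsub>A\<^esub> u" unfolding I_def by blast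
  have "\<one>\<^bsub>A\<^esub> = (\<one>\<^bsub>A\<^esub> \<ominus>\<^bsub>A\<^esub> N \<otimes>\<^bsub>A\<^esub> y) \<oplus>\<^bsub>A\<^esub> N \<otimes>\<^bsub>A\<^esub> y"
    using Ny by (simp add: A.minus_eq A.a_assoc A.l_neg)
  then have e: "\<one>\<^bsub>A\<^esub> = a \<otimes>\<^bsub>A\<^esub> u \<oplus>\<^bsub>A\<^esub> N \<otimes>\<^bsub>A\<^esub> y" using a by simp
  have "eps \<one>\<^bsub>A\<^esub> = eps (a \<otimes>\<^bsub>A\<^esub> u) \<oplus>\<^bsub>R\<^esub> eps (N \<otimes>\<^bsub>A\<^esub> y)"
    by (subst e, rule eps_add) (use a u_A Ny in simp_all)
  also have "\<dots> = eps a \<otimes>\<^bsub>R\<^esub> eps u \<oplus>\<^bsub>R\<^esub> eps N \<otimes>\<^bsub>R\<^esub> eps y"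
    using eps_mult a u_A N_A y by simp
  also have "\<dots> = \<zero>\<^bsub>R\<^esub>" using eps_u eps_N eps_closed a y by simp
  finally show False using eps_one one_ne by simp
qed

lemma not_rc: "\<not> regular_coherent_ring A"
proof
  assume "regular_coherent_ring A"
  then have "has_fin_proj_res A Mq" using Mq_fp unfolding regular_coherent_ring_def by blast
  then have "acyc Mq (carrier Mq)" using res_acyc[OF RA _ Mq_lm] by blast
  then show False using Mq_nonacyc by blast
qed

end

lemma (in tor) not_rc_gr: "\<not> regular_coherent_ring (group_ring R G)"
proof (cases "ring (group_ring R G)")
  case False then show ?thesis by (simp add: regular_coherent_ring_def)
next
  case True
  interpret tor2 G R h p by (rule tor2.intro[OF tor_axioms tor2_axioms.intro[OF True]])
  show ?thesis using not_rc by (simp add: A_def)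
qed


theorem lemma4p3:
  fixes G :: "'g monoid"
  assumes "group G"
    and "infinite (UNIV :: 'r set)"
    and "regular_coherent_group TYPE('r) G"
  shows "torsionfree G"
  unfolding torsionfree_def
proof (intro ballI impI)
  interpret G: group G by fact
  fix g assume g: "g \<in> carrier G" and "\<exists>n::nat. n > 0 \<and> g [^]\<^bsub>G\<^esub> n = \<one>\<^bsub>G\<^esub>"
  then obtain n :: nat where n: "n > 0" "g [^]\<^bsub>G\<^esub> n = \<one>\<^bsub>G\<^esub>" by blast
  show "g = \<one>\<^bsub>G\<^esub>"
  proof (rule ccontr)
    assume gne: "g \<noteq> \<one>\<^bsub>G\<^esub>"
    define m where "m = G.ord g"
    have mdvd: "m dvd n" using G.pow_eq_id[OF g] n m_def by simp
    have m0: "m \<noteq> 0" using mdvd n by auto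
    have m1: "m \<noteq> 1"
    proof
      assume "m = 1"
      then have "g [^]\<^bsub>G\<^esub> (1::nat) = \<one>\<^bsub>G\<^esub>" using G.pow_eq_id[OF g, of 1] m_def by simp
      then show False using gne g by simp
    qed
    obtain p where pp: "prime p" and pdvd: "p dvd m" using prime_factor_nat[OF m1] by blast
    have p2: "2 \<le> p" using prime_ge_2_nat[OF pp] .
    define k where "k = m div p"
    have mk: "m = p * k" using pdvd k_def by simp
    have k0: "k \<noteq> 0" using mk m0 by auto
    have kdvd: "k dvd G.ord g" using mk m_def by simp
    define h where "h = g [^]\<^bsub>G\<^esub> k"
    have hG: "h \<in> carrier G" using g h_def by simp
    have oh: "G.ord h = p" using G.ord_pow[OF g kdvd k0] mk m_def k0 h_def by simp
    have hp: "h [^]\<^bsub>G\<^esub> p = \<one>\<^bsub>G\<^esub>" using G.pow_eq_id[OF hG] oh by simp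
    have hinj: "inj_on (\<lambda>i. h [^]\<^bsub>G\<^esub> i) {..<p}"
    proof -
      have *: "i = j" if ij: "i \<le> j" "j < p" "h [^]\<^bsub>G\<^esub> i = h [^]\<^bsub>G\<^esub> j" for i j :: nat
      proof -
        have "h [^]\<^bsub>G\<^esub> j = h [^]\<^bsub>G\<^esub> i \<otimes>\<^bsub>G\<^esub> h [^]\<^bsub>G\<^esub> (j - i)"
          using ij(1) hG by (simp add: G.nat_pow_mult)
        then have "h [^]\<^bsub>G\<^esub> i \<otimes>\<^bsub>G\<^esub> h [^]\<^bsub>G\<^esub> (j - i) = h [^]\<^bsub>G\<^esub> i \<otimes>\<^bsub>G\<^esub> \<one>\<^bsub>G\<^esub>"
          using ij hG by simp
        then have "h [^]\<^bsub>G\<^esub> (j - i) = \<one>\<^bsub>G\<^esub>" using hG G.l_cancel_one by simp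
        then have "p dvd (j - i)" using G.pow_eq_id[OF hG] oh by simp
        then show "i = j" using ij dvd_imp_le[of p "j - i"] by (cases "j - i = 0") auto
      qed
      show ?thesis unfolding inj_on_def
        using * by (metis le_cases lessThan_iff)
    qed
    obtain S :: "'r ring" where S: "field S" "finite (carrier S)" "add_pow S p \<one>\<^bsub>S\<^esub> = \<zero>\<^bsub>S\<^esub>"
      using exists_fp[OF assms(2) pp] by blast
    interpret S: field S by (rule S(1))
    have "regular_ring S" using field_regular[OF S(1,2)] .
    then have rc: "regular_coherent_ring (group_ring S G)"
      using assms(3) unfolding regular_coherent_group_def by blast
    interpret T: tor G S h p
      by (intro tor.intro tor_axioms.intro G.group_axioms S.ring_axioms hG p2 hp hinj S(3) S.one_not_zero)
    show False using T.not_rc_gr rc by blast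
  qed
qed


end
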